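(* The shuffle algebra $K[S_\infty]=\bigoplus_{n\ge1}K[S_n]$, with $\sigma\bullet_\gamma\tau=(\sigma\times\tau)\cdot\gamma$ for $\sigma\in S_n$, $\tau\in S_m$, $\gamma\in Sh(n,m)$, equipped with the coproduct $\Delta_{MR}(\sigma)=\sum_{r=1}^{n-1}\mathrm{std}(\sigma(1),\dots,\sigma(r))\otimes\mathrm{std}(\sigma(r+1),\dots,\sigma(n))$ for $\sigma\in S_n$, is a shuffle bialgebra.
   Context: Permutations $\sigma\in S_n$ are written as words $(\sigma(1),\dots,\sigma(n))$; $1_n$ is the identity, and $\sigma\cdot\tau$ denotes composition, $(\sigma\cdot\tau)(i)=\sigma(\tau(i))$. For $\sigma\in S_n$, $\tau\in S_m$, $\sigma\times\tau\in S_{n+m}$ is $(\sigma(1),\dots,\sigma(n),\tau(1)+n,\dots,\tau(m)+n)$. For nonnegative integers $n_1,\dots,n_r$ with sum $n$, $Sh(n_1,\dots,n_r)$ is the set of $\sigma\in S_n$ such that $\sigma^{-1}(n_1+\dots+n_{k-1}+1)<\dots<\sigma^{-1}(n_1+\dots+n_k)$ for every $k$. For $n,m\ge0$, $\epsilon_{n,m}=(n+1,\dots,n+m,1,\dots,n)\in Sh(n,m)$. For a word of distinct integers, $\mathrm{std}$ denotes its standardization: the permutation obtained by replacing its $j$-th smallest letter by $j$. An element of $S_n$ has degree $n$. A shuffle algebra is a graded vector space $A=\bigoplus_{n\ge0}A_n$ over a field $K$ with linear maps $\bullet_\gamma:A_n\otimes A_m\to A_{n+m}$ for all $n,m\ge0$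 and $\gamma\in Sh(n,m)$, such that for $x\in A_n$, $y\in A_m$, $z\in A_r$ one has $x\bullet_\gamma(y\bullet_\delta z)=(x\bullet_\sigma y)\bullet_\lambda z$ whenever $\gamma\in Sh(n,m+r)$, $\delta\in Sh(m,r)$, $\sigma\in Sh(n,m)$, $\lambda\in Sh(n+m,r)$ satisfy $(1_n\times\delta)\cdot\gamma=(\sigma\times1_r)\cdot\lambda$. Decomposition of shuffles: for $\gamma\in Sh(n,m)$ and $0\le r\le n+m$, put $n_1=|\gamma^{-1}(\{1,\dots,n\})\cap\{1,\dots,r\}|$ and $m_1=r-n_1$; there are unique $\gamma^r_{(1)}\in Sh(n_1,m_1)$ and $\gamma^{n+m-r}_{(2)}\in Sh(n-n_1,m-m_1)$ with $\gamma=(1_{n_1}\times\epsilon_{n-n_1,m_1}\times1_{m-m_1})\cdot(\gamma^r_{(1)}\times\gamma^{n+m-r}_{(2)})$. A shuffle bialgebra is a shuffle algebra $A$ with $A_0=0$ together with a coassociative coproduct $\Delta:A\to A\otimes A$ with $\Delta(A_n)\subseteq\bigoplus_{i=1}^{n-1}A_i\otimes A_{n-i}$, such that for $x\in A_n$, $y\in A_m$, $\gamma\in Sh(n,m)$: $\Delta(x\bullet_\gamma y)=\sum_{r=1}^{n+m-1}\sum(x_{(1)}\bullet_{\gamma^r_{(1)}}y_{(1)})\otimes(x_{(2)}\bullet_{\gamma^{n+m-r}_{(2)}}y_{(2)})$, where, with $\Delta_+(z)=z\otimes1+1\otimes z+\Delta(z)$ on $K1\oplus A$ ($1$ of degree $0$),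 the inner sum is over the homogeneous components $x_{(1)}\otimes x_{(2)}$ of $\Delta_+(x)$ with $|x_{(1)}|=n_1$ and $y_{(1)}\otimes y_{(2)}$ of $\Delta_+(y)$ with $|y_{(1)}|=m_1$, using the conventions $1\bullet_\tau z=z\bullet_\tau1=z$. *)

theory Defs
  imports Main "HOL-Library.Poly_Mapping"
begin

text \<open>Permutations in S_n are represented as words (lists) (sigma(1),...,sigma(n)),
  so sigma(i) = w ! (i-1). The empty word is the unique element of S_0 (the unit 1).
  Elements of K[S_infinity] and of its tensor powers are finitely supported
  K-valued functions on words / pairs / triples of words (the basis coefficients).\<close>

type_synonym word = "nat list"

definition is_perm :: "nat \<Rightarrow> word \<Rightarrow> bool" where
  "is_perm n w \<longleftrightarrow> length w = n \<and> set w = {1..n}"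

definition idp :: "nat \<Rightarrow> word" where
  "idp n = [1..<Suc n]"

definition compw :: "word \<Rightarrow> word \<Rightarrow> word" where
  "compw s t = map (\<lambda>j. s ! (j - 1)) t"

definition crossw :: "word \<Rightarrow> word \<Rightarrow> word" where
  "crossw s t = s @ map (\<lambda>j. j + length s) t"

text \<open>inverse permutation: pinv w ! (k-1) = w^{-1}(k)\<close>
definition pinv :: "word \<Rightarrow> word" where
  "pinv w = map (\<lambda>k. Suc (LEAST i. i < length w \<and> w ! i = k)) [1..<Suc (length w)]"

definition Sh2 :: "nat \<Rightarrow> nat \<Rightarrow> word set" where
  "Sh2 n m = {w. is_perm (n + m) w
      \<and> (\<forall>k. 1 \<le> k \<and> k < n \<longrightarrow> pinv w ! (k - 1) < pinv w ! k)
      \<and> (\<forall>k. n + 1 \<le> k \<and> k < n + m \<longrightarrow> pinv w ! (k - 1) < pinv w ! k)}"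

definition eps :: "nat \<Rightarrow> nat \<Rightarrow> word" where
  "eps n m = [Suc n..<Suc (n + m)] @ [1..<Suc n]"

text \<open>standardization: the j-th smallest letter x has exactly j letters \<le> x\<close>
definition stdw :: "word \<Rightarrow> word" where
  "stdw w = map (\<lambda>x. card {y \<in> set w. y \<le> x}) w"

text \<open>homogeneous component A_n of K[S_infinity] (A_0 = 0)\<close>
definition inA :: "nat \<Rightarrow> (word \<Rightarrow>\<^sub>0 'k::zero) \<Rightarrow> bool" where
  "inA n x \<longleftrightarrow> (\<forall>w\<in>Poly_Mapping.keys x. 1 \<le> n \<and> is_perm n w)"

definition inAll :: "(word \<Rightarrow>\<^sub>0 'k::zero) \<Rightarrow> bool" where
  "inAll x \<longleftrightarrow> (\<forall>w\<in>Poly_Mapping.keys x. 1 \<le> length w \<and> is_perm (length w) w)"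

definition shprod :: "word \<Rightarrow> (word \<Rightarrow>\<^sub>0 'k::field) \<Rightarrow> (word \<Rightarrow>\<^sub>0 'k) \<Rightarrow> (word \<Rightarrow>\<^sub>0 'k)" where
  "shprod g x y = (\<Sum>s\<in>Poly_Mapping.keys x. \<Sum>t\<in>Poly_Mapping.keys y.
      Poly_Mapping.single (compw (crossw s t) g) (Poly_Mapping.lookup x s * Poly_Mapping.lookup y t))"

definition DeltaMR :: "(word \<Rightarrow>\<^sub>0 'k::field) \<Rightarrow> (word \<times> word \<Rightarrow>\<^sub>0 'k)" where
  "DeltaMR x = (\<Sum>s\<in>Poly_Mapping.keys x. \<Sum>r\<in>{1..<length s}.
      Poly_Mapping.single (stdw (take r s), stdw (drop r s)) (Poly_Mapping.lookup x s))"

definition Delta_id :: "(word \<times> word \<Rightarrow>\<^sub>0 'k::field) \<Rightarrow> (word \<times> word \<times> word \<Rightarrow>\<^sub>0 'k)" where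
  "Delta_id t = (\<Sum>(u,v)\<in>Poly_Mapping.keys t. \<Sum>(a,b)\<in>Poly_Mapping.keys (DeltaMR (Poly_Mapping.single u (1::'k))).
      Poly_Mapping.single (a, b, v) (Poly_Mapping.lookup t (u,v) * Poly_Mapping.lookup (DeltaMR (Poly_Mapping.single u (1::'k))) (a,b)))"

definition id_Delta :: "(word \<times> word \<Rightarrow>\<^sub>0 'k::field) \<Rightarrow> (word \<times> word \<times> word \<Rightarrow>\<^sub>0 'k)" where
  "id_Delta t = (\<Sum>(u,v)\<in>Poly_Mapping.keys t. \<Sum>(a,b)\<in>Poly_Mapping.keys (DeltaMR (Poly_Mapping.single v (1::'k))).
      Poly_Mapping.single (u, a, b) (Poly_Mapping.lookup t (u,v) * Poly_Mapping.lookup (DeltaMR (Poly_Mapping.single v (1::'k))) (a,b)))"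

text \<open>Delta_+(z) = z \<otimes> 1 + 1 \<otimes> z + Delta(z), the unit 1 being the empty word\<close>
definition Delta_plus :: "(word \<Rightarrow>\<^sub>0 'k::field) \<Rightarrow> (word \<times> word \<Rightarrow>\<^sub>0 'k)" where
  "Delta_plus x = (\<Sum>s\<in>Poly_Mapping.keys x. Poly_Mapping.single (s, []) (Poly_Mapping.lookup x s)
      + Poly_Mapping.single ([], s) (Poly_Mapping.lookup x s)) + DeltaMR x"

definition n1_of :: "word \<Rightarrow> nat \<Rightarrow> nat \<Rightarrow> nat" where
  "n1_of g n r = card {i \<in> {1..r}. g ! (i - 1) \<in> {1..n}}"

definition dec :: "word \<Rightarrow> nat \<Rightarrow> nat \<Rightarrow> nat \<Rightarrow> word \<times> word" where
  "dec g n m r = (let n1 = n1_of g n r; m1 = r - n1 in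
     THE (a, b). a \<in> Sh2 n1 m1 \<and> b \<in> Sh2 (n - n1) (m - m1) \<and>
       g = compw (crossw (crossw (idp n1) (eps (n - n1) m1)) (idp (m - m1))) (crossw a b))"

definition shE :: "word \<Rightarrow> word \<Rightarrow> word \<Rightarrow> word" where
  "shE g s t = (if s = [] then t else if t = [] then s else compw (crossw s t) g)"

text \<open>right-hand side of the compatibility condition, expanded bilinearly
  over the homogeneous components of Delta_+(x) and Delta_+(y)\<close>
definition compat_rhs :: "word \<Rightarrow> nat \<Rightarrow> nat \<Rightarrow> (word \<Rightarrow>\<^sub>0 'k::field) \<Rightarrow> (word \<Rightarrow>\<^sub>0 'k)
    \<Rightarrow> (word \<times> word \<Rightarrow>\<^sub>0 'k)" where
  "compat_rhs g n m x y = (\<Sum>r\<in>{1..<n + m}.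
     let n1 = n1_of g n r; m1 = r - n1; g1 = fst (dec g n m r); g2 = snd (dec g n m r) in
     (\<Sum>(a,b)\<in>{p \<in> Poly_Mapping.keys (Delta_plus x). length (fst p) = n1}.
      \<Sum>(c,d)\<in>{p \<in> Poly_Mapping.keys (Delta_plus y). length (fst p) = m1}.
        Poly_Mapping.single (shE g1 a c, shE g2 b d)
          (Poly_Mapping.lookup (Delta_plus x) (a,b) * Poly_Mapping.lookup (Delta_plus y) (c,d))))"

end

theory Submission
  imports Defs
begin

definition lin :: "('a \<Rightarrow> 'k::zero \<Rightarrow> 'b::comm_monoid_add) \<Rightarrow> ('a \<Rightarrow>\<^sub>0 'k) \<Rightarrow> 'b" where
  "lin F x = (\<Sum>p\<in>Poly_Mapping.keys x. F p (Poly_Mapping.lookup x p))"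

definition addf :: "('k::plus \<Rightarrow> 'b::plus) \<Rightarrow> bool" where
  "addf f \<longleftrightarrow> (\<forall>a b. f (a + b) = f a + f b)"

lemma addf_zero: "addf (f :: 'k::monoid_add \<Rightarrow> 'b::ab_group_add) \<Longrightarrow> f 0 = 0"
  unfolding addf_def by (metis add.right_neutral add_left_cancel)

lemma lin_superset:
  assumes "finite S" "Poly_Mapping.keys x \<subseteq> S" "\<And>p. F p 0 = 0"
  shows "lin F x = (\<Sum>p\<in>S. F p (Poly_Mapping.lookup x p))"
  unfolding lin_def
  by (rule sum.mono_neutral_left) (use assms in \<open>auto simp: in_keys_iff\<close>)

lemma lin_add:
  fixes F :: "'a \<Rightarrow> 'k::monoid_add \<Rightarrow> 'b::ab_group_add"
  assumes "\<And>p. addf (F p)"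
  shows "lin F (x + y) = lin F x + lin F y"
proof -
  have z: "\<And>p. F p 0 = 0" using addf_zero assms by blast
  let ?S = "Poly_Mapping.keys x \<union> Poly_Mapping.keys y"
  have "lin F (x + y) = (\<Sum>p\<in>?S. F p (Poly_Mapping.lookup (x+y) p))"
    by (rule lin_superset) (auto simp: z keys_add)
  also have "\<dots> = (\<Sum>p\<in>?S. F p (Poly_Mapping.lookup x p)) + (\<Sum>p\<in>?S. F p (Poly_Mapping.lookup y p))"
    using assms by (simp add: lookup_add addf_def sum.distrib)
  also have "\<dots> = lin F x + lin F y"
    by (subst (1 2) lin_superset[where S="?S"]) (auto simp: z)
  finally show ?thesis .
qed

lemma lin_zero: "lin F 0 = 0"
  by (simp add: lin_def)

lemma lin_sum:
  fixes F :: "'a \<Rightarrow> 'k::comm_monoid_add \<Rightarrow> 'b::ab_group_add"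
  assumes "\<And>p. addf (F p)"
  shows "lin F (sum f A) = (\<Sum>i\<in>A. lin F (f i))"
proof -
  have "sum (lin F \<circ> f) A = lin F (sum f A)"
    by (rule sum_comp_morphism) (simp_all add: lin_zero lin_add assms)
  then show ?thesis by (simp add: o_def)
qed

lemma lin_single:
  fixes F :: "'a \<Rightarrow> 'k::monoid_add \<Rightarrow> 'b::ab_group_add"
  assumes "\<And>p. addf (F p)"
  shows "lin F (Poly_Mapping.single q c) = F q c"
  using addf_zero[OF assms] by (simp add: lin_def)

lemma addf_single: "addf (Poly_Mapping.single k)"
  by (simp add: addf_def single_add)

lemma addf_single_mult: "addf (\<lambda>c. Poly_Mapping.single k (c * (e::'k::field)))"
  by (simp add: addf_def single_add distrib_right)

lemma addf_sum: "(\<And>i. addf (f i)) \<Longrightarrow> addf (\<lambda>c. (\<Sum>i\<in>A. f i c) :: 'b::comm_monoid_add)"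
  by (simp add: addf_def sum.distrib)

lemma addf_add: "addf f \<Longrightarrow> addf g \<Longrightarrow> addf (\<lambda>c. f c + (g c :: 'b::comm_monoid_add))"
  by (simp add: addf_def ac_simps)

lemma addf_lin_inner:
  fixes G :: "'a \<Rightarrow> 'k::field \<Rightarrow> 'b::ab_group_add"
  assumes "\<And>q. addf (G q)"
  shows "addf (\<lambda>a. lin (\<lambda>q b. G q (a * b)) y)"
  using assms by (simp add: addf_def lin_def distrib_right sum.distrib)

lemma addf_lin_outer:
  fixes G :: "'a \<Rightarrow> 'k::field \<Rightarrow> 'b::ab_group_add"
  assumes "\<And>q. addf (G q)"
  shows "addf (\<lambda>b. G q (a * b))"
  using assms by (simp add: addf_def distrib_left)

lemma addf_lin:
  fixes F :: "'a \<Rightarrow> 'k::monoid_add \<Rightarrow> 'b::ab_group_add"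
  shows "(\<And>p. addf (F p)) \<Longrightarrow> addf (lin F)"
  unfolding addf_def[of "lin F"] using lin_add by blast

lemma addf_comp: "addf f \<Longrightarrow> addf g \<Longrightarrow> addf (f \<circ> g)"
  by (simp add: addf_def)

lemma poly_expand: "x = (\<Sum>k\<in>Poly_Mapping.keys x. Poly_Mapping.single k (Poly_Mapping.lookup x k))"
proof (rule poly_mapping_eqI)
  fix k'
  show "Poly_Mapping.lookup x k' = Poly_Mapping.lookup (\<Sum>k\<in>Poly_Mapping.keys x. Poly_Mapping.single k (Poly_Mapping.lookup x k)) k'"
    by (simp add: lookup_sum lookup_single when_def in_keys_iff)
qed


lemma perm_len: "is_perm n w \<Longrightarrow> length w = n"
  by (simp add: is_perm_def)

lemma perm_distinct: "is_perm n w \<Longrightarrow> distinct w"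
  unfolding is_perm_def by (metis card_atLeastAtMost card_distinct diff_Suc_1)

lemma perm_nth: "is_perm n w \<Longrightarrow> i < n \<Longrightarrow> 1 \<le> w!i \<and> w!i \<le> n"
  unfolding is_perm_def by (metis atLeastAtMost_iff nth_mem)

lemma perm_set: "is_perm n w \<Longrightarrow> set w = {1..n}"
  by (simp add: is_perm_def)

lemma perm_surj: "is_perm n w \<Longrightarrow> 1 \<le> v \<Longrightarrow> v \<le> n \<Longrightarrow> \<exists>i<n. w!i = v"
  unfolding is_perm_def by (metis atLeastAtMost_iff in_set_conv_nth)

lemma perm_inj: "is_perm n w \<Longrightarrow> i < n \<Longrightarrow> j < n \<Longrightarrow> w!i = w!j \<Longrightarrow> i = j"
  using perm_distinct perm_len nth_eq_iff_index_eq by metis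

lemma perm_intro:
  assumes "length w = n" "distinct w" "\<And>i. i < n \<Longrightarrow> 1 \<le> w!i \<and> w!i \<le> n"
  shows "is_perm n w"
proof -
  have "set w \<subseteq> {1..n}" using assms by (auto simp: in_set_conv_nth)
  moreover have "card (set w) = card {1..n}" using assms distinct_card by fastforce
  ultimately show ?thesis unfolding is_perm_def using assms(1)
    by (simp add: card_subset_eq)
qed

lemma perm_vals: "is_perm n w \<Longrightarrow> \<forall>j\<in>set w. 1 \<le> j \<and> j \<le> n"
  by (simp add: is_perm_def)

lemma compw_len[simp]: "length (compw s t) = length t"
  by (simp add: compw_def)

lemma compw_nth: "i < length t \<Longrightarrow> compw s t ! i = s ! (t!i - 1)"
  by (simp add: compw_def)

lemma crossw_len[simp]: "length (crossw s t) = length s + length t"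
  by (simp add: crossw_def)

lemma crossw_nth: "i < length s + length t \<Longrightarrow>
   crossw s t ! i = (if i < length s then s!i else t!(i - length s) + length s)"
  by (simp add: crossw_def nth_append)

lemma compw_perm:
  assumes "is_perm n s" "is_perm n t" shows "is_perm n (compw s t)"
proof (rule perm_intro)
  show "length (compw s t) = n" using assms by (simp add: perm_len)
  show "distinct (compw s t)"
    unfolding distinct_conv_nth
  proof (intro allI impI)
    fix i j assume ij: "i < length (compw s t)" "j < length (compw s t)" "i \<noteq> j"
    then have "i < n" "j < n" using assms by (auto simp: perm_len)
    then have "t!i \<noteq> t!j" using perm_inj[OF assms(2)] ij by blast
    moreover have "1 \<le> t!i" "t!i \<le> n" "1 \<le> t!j" "t!j \<le> n" using perm_nth[OF assms(2)] \<open>i<n\<close> \<open>j<n\<close> by auto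
    ultimately have "s!(t!i - 1) \<noteq> s!(t!j - 1)" using perm_inj[OF assms(1), of "t!i - 1" "t!j - 1"] by linarith
    then show "compw s t ! i \<noteq> compw s t ! j" using ij by (simp add: compw_nth)
  qed
  fix i assume "i < n"
  then show "1 \<le> compw s t ! i \<and> compw s t ! i \<le> n"
  proof -
    have "1 \<le> t!i \<and> t!i \<le> n" using perm_nth[OF assms(2)] \<open>i<n\<close> by blast
    then have "t!i - 1 < n" by linarith
    then show ?thesis using assms perm_nth[OF assms(1), of "t!i - 1"] \<open>i<n\<close>
      by (simp add: compw_nth perm_len)
  qed
qed

lemma crossw_perm:
  assumes "is_perm n s" "is_perm m t" shows "is_perm (n + m) (crossw s t)"
proof (rule perm_intro)
  show "length (crossw s t) = n + m" using assms by (simp add: perm_len)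
  show "distinct (crossw s t)" using assms perm_distinct perm_vals[OF assms(1)] perm_vals[OF assms(2)]
    by (fastforce simp: crossw_def distinct_map inj_on_def perm_len)
  fix i assume "i < n + m"
  then show "1 \<le> crossw s t ! i \<and> crossw s t ! i \<le> n + m"
    using assms perm_nth[OF assms(1), of i] perm_nth[OF assms(2), of "i - n"]
    by (auto simp: crossw_nth perm_len; linarith)
qed

lemma idp_perm: "is_perm n (idp n)"
  unfolding is_perm_def idp_def by (simp del: upt_Suc add: atLeastLessThanSuc_atLeastAtMost)

lemma idp_len[simp]: "length (idp n) = n" by (simp add: idp_def)
lemma idp_nth: "i < n \<Longrightarrow> idp n ! i = Suc i" by (simp add: idp_def del: upt_Suc)

lemma eps_perm: "is_perm (n + m) (eps n m)"
  by (rule perm_intro) (auto simp: eps_def nth_append)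

lemma compw_assoc:
  assumes "\<forall>j\<in>set c. 1 \<le> j \<and> j \<le> length b"
  shows "compw (compw a b) c = compw a (compw b c)"
  using assms by (auto simp: compw_def intro!: map_cong)

lemma compw_idp_right: "length a = n \<Longrightarrow> compw a (idp n) = a"
  by (rule nth_equalityI) (auto simp: compw_nth idp_nth)

lemma compw_idp_left: "\<forall>j\<in>set b. 1 \<le> j \<and> j \<le> n \<Longrightarrow> compw (idp n) b = b"
  by (rule nth_equalityI) (auto simp: compw_nth, metis Suc_le_eq Suc_pred idp_nth nth_mem)

lemma crossw_assoc: "crossw (crossw a b) c = crossw a (crossw b c)"
  by (simp add: crossw_def add.assoc)

lemma crossw_compw:
  assumes "length a = length b" "\<forall>j\<in>set b. 1 \<le> j \<and> j \<le> length a"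
    "\<forall>j\<in>set d. 1 \<le> j \<and> j \<le> length c"
  shows "crossw (compw a b) (compw c d) = compw (crossw a c) (crossw b d)"
  using assms by (auto simp: crossw_def compw_def nth_append intro!: map_cong)


definition oiso :: "word \<Rightarrow> word \<Rightarrow> bool" where
  "oiso u v \<longleftrightarrow> length u = length v \<and>
     (\<forall>i<length u. \<forall>j<length u. (u!i < u!j) = (v!i < v!j))"

lemma oiso_refl: "oiso u u" by (simp add: oiso_def)
lemma oiso_sym: "oiso u v \<Longrightarrow> oiso v u" by (simp add: oiso_def)
lemma oiso_trans: "oiso u v \<Longrightarrow> oiso v w \<Longrightarrow> oiso u w" by (simp add: oiso_def)
lemma oiso_take: "oiso u v \<Longrightarrow> oiso (take k u) (take k v)" by (simp add: oiso_def)
lemma oiso_drop: "oiso u v \<Longrightarrow> oiso (drop k u) (drop k v)" by (simp add: oiso_def)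

lemma oiso_eq: "oiso u v \<Longrightarrow> i < length u \<Longrightarrow> j < length u \<Longrightarrow> (u!i = u!j) = (v!i = v!j)"
proof -
  assume a: "oiso u v" "i < length u" "j < length u"
  then have "(u!i < u!j) = (v!i < v!j)" "(u!j < u!i) = (v!j < v!i)" by (auto simp: oiso_def)
  moreover have "(u!i = u!j) = (\<not> u!i < u!j \<and> \<not> u!j < u!i)" by auto
  moreover have "(v!i = v!j) = (\<not> v!i < v!j \<and> \<not> v!j < v!i)" by auto
  ultimately show ?thesis by simp
qed

lemma oiso_le: "oiso u v \<Longrightarrow> i < length u \<Longrightarrow> j < length u \<Longrightarrow> (u!i \<le> u!j) = (v!i \<le> v!j)"
proof -
  assume a: "oiso u v" "i < length u" "j < length u"
  then have "(u!j < u!i) = (v!j < v!i)" by (auto simp: oiso_def)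
  then show ?thesis by (simp add: not_less[symmetric])
qed

lemma oiso_distinct: "oiso u v \<Longrightarrow> distinct u \<Longrightarrow> distinct v"
proof -
  assume a: "oiso u v" "distinct u"
  then have l: "length u = length v" by (simp add: oiso_def)
  show ?thesis unfolding distinct_conv_nth
  proof (intro allI impI)
    fix i j assume "i < length v" "j < length v" "i \<noteq> j"
    then show "v!i \<noteq> v!j" using a l oiso_eq[OF a(1), of i j] by (simp add: nth_eq_iff_index_eq)
  qed
qed

lemma stdw_len[simp]: "length (stdw u) = length u"
  by (simp add: stdw_def)

lemma stdw_nth: "i < length u \<Longrightarrow> stdw u ! i = card {y\<in>set u. y \<le> u!i}"
  by (simp add: stdw_def)

lemma card_le_idx:
  assumes "distinct u" "i < length u"
  shows "card {y\<in>set u. y \<le> u!i} = card {j. j < length u \<and> u!j \<le> u!i}"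
proof -
  have "{y\<in>set u. y \<le> u!i} = (\<lambda>j. u!j) ` {j. j < length u \<and> u!j \<le> u!i}"
    by (auto simp: in_set_conv_nth)
  moreover have "inj_on (\<lambda>j. u!j) {j. j < length u \<and> u!j \<le> u!i}"
    using assms by (auto simp: inj_on_def nth_eq_iff_index_eq)
  ultimately show ?thesis by (simp add: card_image)
qed

lemma oiso_std_eq:
  assumes "distinct u" "oiso u v" shows "stdw u = stdw v"
proof (rule nth_equalityI)
  have dv: "distinct v" using oiso_distinct assms by blast
  have l: "length u = length v" using assms by (simp add: oiso_def)
  show "length (stdw u) = length (stdw v)" using l by simp
  fix i assume "i < length (stdw u)"
  then have i: "i < length u" by simp
  have "{j. j < length u \<and> u!j \<le> u!i} = {j. j < length v \<and> v!j \<le> v!i}"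
    using oiso_le[OF assms(2) _ i] l by auto
  then show "stdw u ! i = stdw v ! i"
    using card_le_idx[OF assms(1) i] card_le_idx[OF dv, of i] i l by (simp add: stdw_nth)
qed

lemma stdw_perm_id:
  assumes "is_perm n p" shows "stdw p = p"
proof (rule nth_equalityI)
  show "length (stdw p) = length p" by simp
  fix i assume "i < length (stdw p)"
  then have i: "i < n" using assms by (simp add: perm_len)
  have "{y\<in>set p. y \<le> p!i} = {1..p!i}"
    using perm_set[OF assms] perm_nth[OF assms i] by auto
  then show "stdw p ! i = p ! i" using i assms by (simp add: stdw_nth perm_len)
qed

lemma card_le_strict:
  assumes "finite S" "x' \<in> S" "x < x'"
  shows "card {y\<in>S. y \<le> x} < card {y\<in>(S::nat set). y \<le> x'}"
proof (rule psubset_card_mono)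
  show "finite {y\<in>S. y \<le> x'}" using assms by simp
  have "x' \<in> {y\<in>S. y \<le> x'}" "x' \<notin> {y\<in>S. y \<le> x}" using assms by auto
  moreover have "{y\<in>S. y \<le> x} \<subseteq> {y\<in>S. y \<le> x'}" using assms by auto
  ultimately show "{y\<in>S. y \<le> x} \<subset> {y\<in>S. y \<le> x'}" by blast
qed

lemma card_le_mono:
  assumes "finite S" "x' \<le> x"
  shows "card {y\<in>S. y \<le> x'} \<le> card {y\<in>(S::nat set). y \<le> x}"
  by (rule card_mono) (use assms in auto)

lemma oiso_stdw: "oiso u (stdw u)"
  unfolding oiso_def
proof (intro conjI allI impI)
  fix i j assume ij: "i < length u" "j < length u"
  show "(u!i < u!j) = (stdw u ! i < stdw u ! j)"
  proof
    assume "u!i < u!j"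
    then show "stdw u ! i < stdw u ! j"
      using card_le_strict[of "set u" "u!j" "u!i"] ij by (simp add: stdw_nth)
  next
    assume h: "stdw u ! i < stdw u ! j"
    show "u!i < u!j"
    proof (rule ccontr)
      assume "\<not> u!i < u!j"
      then have "u!j \<le> u!i" by simp
      then have "stdw u ! j \<le> stdw u ! i"
        using card_le_mono[of "set u" "u!j" "u!i"] ij by (simp add: stdw_nth)
      then show False using h by simp
    qed
  qed
qed simp

lemma stdw_is_perm:
  assumes "distinct u" shows "is_perm (length u) (stdw u)"
proof (rule perm_intro)
  show "length (stdw u) = length u" by simp
  show "distinct (stdw u)" using oiso_distinct[OF oiso_stdw assms] .
  fix i assume i: "i < length u"
  have "u!i \<in> {y\<in>set u. y \<le> u!i}" using i by simp
  then have "{y\<in>set u. y \<le> u!i} \<noteq> {}" by blast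
  then have "1 \<le> card {y\<in>set u. y \<le> u!i}"
    by (simp add: Suc_le_eq card_gt_0_iff)
  moreover have "card {y\<in>set u. y \<le> u!i} \<le> card (set u)" by (rule card_mono) auto
  ultimately show "1 \<le> stdw u ! i \<and> stdw u ! i \<le> length u"
    using i distinct_card[OF assms] by (simp add: stdw_nth)
qed

lemma stdw_nil[simp]: "stdw [] = []" by (simp add: stdw_def)

lemma std_std_eq: "distinct u \<Longrightarrow> oiso u v \<Longrightarrow> distinct v \<Longrightarrow> stdw u = stdw v"
  using oiso_std_eq by blast

lemma std_take_take: "distinct s \<Longrightarrow> i \<le> r \<Longrightarrow> stdw (take i (stdw (take r s))) = stdw (take i s)"
proof -
  assume d: "distinct s" and ir: "i \<le> r"
  have "oiso (take i (take r s)) (take i (stdw (take r s)))"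
    by (rule oiso_take[OF oiso_stdw])
  then show ?thesis using oiso_std_eq[of "take i (take r s)"] d ir
    by (simp add: min_absorb1)
qed

lemma std_drop_take: "distinct s \<Longrightarrow> stdw (drop i (stdw (take r s))) = stdw (take (r - i) (drop i s))"
proof -
  assume d: "distinct s"
  have "oiso (drop i (take r s)) (drop i (stdw (take r s)))"
    by (rule oiso_drop[OF oiso_stdw])
  then show ?thesis using oiso_std_eq[of "drop i (take r s)"] d
    by (simp add: drop_take)
qed

lemma std_take_drop: "distinct s \<Longrightarrow> stdw (take j (stdw (drop r s))) = stdw (take j (drop r s))"
proof -
  assume d: "distinct s"
  have "oiso (take j (drop r s)) (take j (stdw (drop r s)))"
    by (rule oiso_take[OF oiso_stdw])
  then show ?thesis using oiso_std_eq[of "take j (drop r s)"] d by simp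
qed

lemma std_drop_drop: "distinct s \<Longrightarrow> stdw (drop j (stdw (drop r s))) = stdw (drop (r + j) s)"
proof -
  assume d: "distinct s"
  have "oiso (drop j (drop r s)) (drop j (stdw (drop r s)))"
    by (rule oiso_drop[OF oiso_stdw])
  then show ?thesis using oiso_std_eq[of "drop j (drop r s)"] d by (simp add: add.commute)
qed


definition blk :: "nat \<Rightarrow> nat \<Rightarrow> word \<Rightarrow> bool" where
  "blk lo hi g \<longleftrightarrow> (\<forall>i j. i < j \<longrightarrow> j < length g \<longrightarrow> lo < g!i \<longrightarrow> g!i \<le> hi \<longrightarrow>
      lo < g!j \<longrightarrow> g!j \<le> hi \<longrightarrow> g!i < g!j)"

lemma pinv_nth:
  assumes "is_perm N g" "i < N"
  shows "pinv g ! (g!i - 1) = Suc i"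
proof -
  have v: "1 \<le> g!i" "g!i \<le> N" using perm_nth[OF assms] by auto
  have l: "length g = N" using assms by (simp add: perm_len)
  have "[1..<Suc N] ! (g!i - 1) = g!i" using v by (simp del: upt_Suc)
  moreover have "(LEAST i'. i' < length g \<and> g!i' = g!i) = i"
    by (rule Least_equality) (use assms l perm_inj[OF assms(1)] in \<open>auto simp: not_less[symmetric]\<close>)
  ultimately show ?thesis using v l unfolding pinv_def by (simp del: upt_Suc)
qed

lemma chain_mono:
  assumes "\<And>k. lo \<le> k \<Longrightarrow> Suc k \<le> hi \<Longrightarrow> (q::nat\<Rightarrow>nat) k < q (Suc k)"
    "lo \<le> a" "a < b" "b \<le> hi"
  shows "q a < q b"
  using assms(3,4)
proof (induction b rule: less_induct)
  case (less b)
  then obtain b' where b: "b = Suc b'" "a \<le> b'" by (metis less_imp_Suc_add le_add1)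
  show ?case
  proof (cases "a = b'")
    case True then show ?thesis using assms(1,2) less b by auto
  next
    case False
    then have "q a < q b'" using less b by auto
    also have "q b' < q b" using assms(1,2) less b by auto
    finally show ?thesis .
  qed
qed

lemma blk_iff_pinv:
  assumes "is_perm N g" "hi \<le> N"
  shows "blk lo hi g \<longleftrightarrow> (\<forall>k. lo + 1 \<le> k \<and> k < hi \<longrightarrow> pinv g ! (k - 1) < pinv g ! k)"
proof
  assume b: "blk lo hi g"
  show "\<forall>k. lo + 1 \<le> k \<and> k < hi \<longrightarrow> pinv g ! (k - 1) < pinv g ! k"
  proof (intro allI impI)
    fix k assume k: "lo + 1 \<le> k \<and> k < hi"
    obtain i where i: "i < N" "g!i = k" using perm_surj[OF assms(1), of k] k assms by auto
    obtain j where j: "j < N" "g!j = Suc k" using perm_surj[OF assms(1), of "Suc k"] k assms by auto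
    have "i < j"
    proof (rule ccontr)
      assume "\<not> i < j"
      moreover have "i \<noteq> j" using i j by auto
      ultimately have "j < i" by simp
      moreover have "i < length g" using i assms by (simp add: perm_len)
      ultimately have "g!j < g!i" using b[unfolded blk_def, rule_format, of j i] i j k by auto
      then show False using i j by simp
    qed
    moreover have "pinv g ! (k - 1) = Suc i" using pinv_nth[OF assms(1) i(1)] i by simp
    moreover have "pinv g ! k = Suc j" using pinv_nth[OF assms(1) j(1)] j by simp
    ultimately show "pinv g ! (k - 1) < pinv g ! k" by simp
  qed
next
  assume h: "\<forall>k. lo + 1 \<le> k \<and> k < hi \<longrightarrow> pinv g ! (k - 1) < pinv g ! k"
  let ?q = "\<lambda>k. pinv g ! (k - 1)"
  have st: "\<And>k. lo + 1 \<le> k \<Longrightarrow> Suc k \<le> hi \<Longrightarrow> ?q k < ?q (Suc k)" using h by auto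
  show "blk lo hi g"
    unfolding blk_def
  proof (intro allI impI)
    fix i j assume ij: "i < j" "j < length g" "lo < g!i" "g!i \<le> hi" "lo < g!j" "g!j \<le> hi"
    have l: "length g = N" using assms by (simp add: perm_len)
    show "g!i < g!j"
    proof (rule ccontr)
      assume "\<not> g!i < g!j"
      moreover have "g!i \<noteq> g!j" using perm_inj[OF assms(1), of i j] ij l by auto
      ultimately have "g!j < g!i" by simp
      then have "?q (g!j) < ?q (g!i)" using chain_mono[of "lo+1" hi ?q "g!j" "g!i", OF st] ij by auto
      then show False using pinv_nth[OF assms(1), of i] pinv_nth[OF assms(1), of j] ij l by auto
    qed
  qed
qed

lemma Sh2_iff: "g \<in> Sh2 n m \<longleftrightarrow> is_perm (n + m) g \<and> blk 0 n g \<and> blk n (n + m) g"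
proof -
  have "is_perm (n + m) g \<Longrightarrow> blk 0 n g \<longleftrightarrow> (\<forall>k. 1 \<le> k \<and> k < n \<longrightarrow> pinv g ! (k - 1) < pinv g ! k)"
    using blk_iff_pinv[of "n+m" g n 0] by simp
  moreover have "is_perm (n + m) g \<Longrightarrow> blk n (n+m) g \<longleftrightarrow> (\<forall>k. n + 1 \<le> k \<and> k < n + m \<longrightarrow> pinv g ! (k - 1) < pinv g ! k)"
    using blk_iff_pinv[of "n+m" g "n+m" n] by simp
  ultimately show ?thesis unfolding Sh2_def by auto
qed

lemma rank:
  assumes "is_perm N g" "blk lo hi g" "hi \<le> N" "i < N" "lo < g!i" "g!i \<le> hi"
  shows "g!i = lo + 1 + card {j. j < i \<and> lo < g!j \<and> g!j \<le> hi}"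
proof -
  have l: "length g = N" using assms by (simp add: perm_len)
  let ?J = "{j. j < i \<and> lo < g!j \<and> g!j \<le> hi}"
  have "(\<lambda>j. g!j) ` ?J = {lo<..<g!i}"
  proof
    show "(\<lambda>j. g!j) ` ?J \<subseteq> {lo<..<g!i}"
      using assms l by (auto simp: blk_def)
    show "{lo<..<g!i} \<subseteq> (\<lambda>j. g!j) ` ?J"
    proof
      fix v assume v: "v \<in> {lo<..<g!i}"
      then obtain j where j: "j < N" "g!j = v" using perm_surj[OF assms(1), of v] assms by auto
      have "j < i"
      proof (rule ccontr)
        assume "\<not> j < i"
        moreover have "j \<noteq> i" using j v by auto
        ultimately have "i < j" by simp
        then have "g!i < g!j" using assms(2)[unfolded blk_def, rule_format, of i j] assms j v l by auto
        then show False using j v by auto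
      qed
      then show "v \<in> (\<lambda>j. g!j) ` ?J" using j v assms by auto
    qed
  qed
  moreover have "inj_on (\<lambda>j. g!j) ?J"
    using perm_inj[OF assms(1)] assms by (auto simp: inj_on_def)
  ultimately have "card ?J = card {lo<..<g!i}" by (metis card_image)
  then show ?thesis using assms by simp
qed

lemma blk_idp:
  assumes "is_perm k g" "blk 0 k g" shows "g = idp k"
proof (rule nth_equalityI)
  show "length g = length (idp k)" using assms by (simp add: perm_len)
  fix i assume "i < length g"
  then have i: "i < k" using assms by (simp add: perm_len)
  have "{j. j < i \<and> 0 < g!j \<and> g!j \<le> k} = {..<i}"
  proof (intro set_eqI iffI)
    fix j assume "j \<in> {..<i}"
    then have "j < k" using i by simp
    then show "j \<in> {j. j < i \<and> 0 < g!j \<and> g!j \<le> k}" using perm_nth[OF assms(1), of j] \<open>j \<in> {..<i}\<close> by auto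
  qed simp
  then show "g ! i = idp k ! i"
    using rank[OF assms(1,2) order.refl i] perm_nth[OF assms(1) i] i by (simp add: idp_nth)
qed

lemma Sh2_zero_left: "g \<in> Sh2 0 k \<Longrightarrow> g = idp k"
  using blk_idp by (simp add: Sh2_iff)

lemma Sh2_zero_right: "g \<in> Sh2 k 0 \<Longrightarrow> g = idp k"
  using blk_idp by (simp add: Sh2_iff)

lemma crossw_nil_left[simp]: "crossw [] c = c" by (simp add: crossw_def)
lemma crossw_nil_right[simp]: "crossw a [] = a" by (simp add: crossw_def)

lemma shE_eq:
  assumes "g \<in> Sh2 (length a) (length c)"
  shows "shE g a c = compw (crossw a c) g"
proof (cases "a = []")
  case True
  then have "g = idp (length c)" using Sh2_zero_left assms by simp
  then show ?thesis using True by (auto simp: shE_def compw_idp_right)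
next
  case False
  show ?thesis
  proof (cases "c = []")
    case True
    then have "g = idp (length a)" using Sh2_zero_right assms by simp
    then show ?thesis using True False by (auto simp: shE_def compw_idp_right)
  qed (use False in \<open>simp add: shE_def\<close>)
qed


locale dctx =
  fixes n m :: nat and g :: word and r :: nat
  assumes sh: "g \<in> Sh2 n m" and rle: "r \<le> n + m"
begin

definition "n1 = card {i. i < r \<and> g!i \<le> n}"
definition "m1 = card {i. i < r \<and> n < g!i}"
definition "h1 v = (if v \<le> n then v else v - n + n1)"
definition "h2 v = (if v \<le> n then v - n1 else v - n1 - m1)"
definition "g1 = map h1 (take r g)"
definition "g2 = map h2 (drop r g)"
definition "P = crossw (crossw (idp n1) (eps (n - n1) m1)) (idp (m - m1))"

lemma gperm: "is_perm (n + m) g" using sh by (simp add: Sh2_iff)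
lemma blk0: "blk 0 n g" using sh by (simp add: Sh2_iff)
lemma blkn: "blk n (n + m) g" using sh by (simp add: Sh2_iff)
lemma glen: "length g = n + m" using gperm by (simp add: perm_len)
lemma gval: "i < n + m \<Longrightarrow> 1 \<le> g!i \<and> g!i \<le> n + m" using perm_nth[OF gperm] by blast

lemma nm_sum: "n1 + m1 = r"
proof -
  have "{i. i < r} = {i. i < r \<and> g!i \<le> n} \<union> {i. i < r \<and> n < g!i}" by auto
  moreover have "{i. i < r \<and> g!i \<le> n} \<inter> {i. i < r \<and> n < g!i} = {}" by auto
  moreover have "finite {i. i < r \<and> g!i \<le> n}" "finite {i. i < r \<and> n < g!i}" by auto
  ultimately have "card {i. i < r} = n1 + m1" unfolding n1_def m1_def
    using card_Un_disjoint by metis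
  then show ?thesis by simp
qed

lemma n1_of_eq: "n1_of g n r = n1"
proof -
  have "{i \<in> {1..r}. g ! (i - 1) \<in> {1..n}} = Suc ` {i. i < r \<and> g!i \<le> n}"
  proof (intro set_eqI iffI)
    fix x assume x: "x \<in> {i \<in> {1..r}. g ! (i - 1) \<in> {1..n}}"
    then have "x = Suc (x - 1)" by auto
    moreover have "x - 1 \<in> {i. i < r \<and> g!i \<le> n}" using x by auto
    ultimately show "x \<in> Suc ` {i. i < r \<and> g!i \<le> n}" by blast
  next
    fix x assume "x \<in> Suc ` {i. i < r \<and> g!i \<le> n}"
    then obtain i where i: "x = Suc i" "i < r" "g!i \<le> n" by blast
    then have "1 \<le> g!i" using gval rle by auto
    then show "x \<in> {i \<in> {1..r}. g ! (i - 1) \<in> {1..n}}" using i by auto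
  qed
  then show ?thesis unfolding n1_of_def n1_def by (simp add: card_image)
qed

lemma n1_le: "n1 \<le> n"
proof -
  have "card {i. i < r \<and> g!i \<le> n} \<le> card {1..n}"
  proof (rule card_inj_on_le)
    show "inj_on ((!) g) {i. i < r \<and> g!i \<le> n}"
      using perm_inj[OF gperm] rle by (auto simp: inj_on_def)
    show "(!) g ` {i. i < r \<and> g!i \<le> n} \<subseteq> {1..n}"
    proof
      fix x assume "x \<in> (!) g ` {i. i < r \<and> g!i \<le> n}"
      then obtain i where "x = g!i" "i < r" "g!i \<le> n" by blast
      then show "x \<in> {1..n}" using gval[of i] rle by auto
    qed
  qed simp
  then show ?thesis by (simp add: n1_def)
qed

lemma m1_le: "m1 \<le> m"
proof -
  have "card {i. i < r \<and> n < g!i} \<le> card {n+1..n+m}"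
  proof (rule card_inj_on_le)
    show "inj_on ((!) g) {i. i < r \<and> n < g!i}"
      using perm_inj[OF gperm] rle by (auto simp: inj_on_def)
    show "(!) g ` {i. i < r \<and> n < g!i} \<subseteq> {n+1..n+m}"
    proof
      fix x assume "x \<in> (!) g ` {i. i < r \<and> n < g!i}"
      then obtain i where "x = g!i" "i < r" "n < g!i" by blast
      then show "x \<in> {n+1..n+m}" using gval[of i] rle by auto
    qed
  qed simp
  then show ?thesis by (simp add: m1_def)
qed

lemma rank_small: "i < n + m \<Longrightarrow> g!i \<le> n \<Longrightarrow> g!i = 1 + card {j. j < i \<and> g!j \<le> n}"
proof -
  assume i: "i < n + m" "g!i \<le> n"
  have "{j. j < i \<and> 0 < g!j \<and> g!j \<le> n} = {j. j < i \<and> g!j \<le> n}"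
  proof (intro set_eqI iffI)
    fix j assume "j \<in> {j. j < i \<and> g!j \<le> n}"
    then show "j \<in> {j. j < i \<and> 0 < g!j \<and> g!j \<le> n}" using gval[of j] i by auto
  qed simp
  moreover have "0 < g!i" using gval[of i] i by auto
  ultimately show ?thesis using rank[OF gperm blk0 _ i(1)] i by simp
qed

lemma rank_big: "i < n + m \<Longrightarrow> n < g!i \<Longrightarrow> g!i = n + 1 + card {j. j < i \<and> n < g!j}"
proof -
  assume i: "i < n + m" "n < g!i"
  have "{j. j < i \<and> n < g!j \<and> g!j \<le> n + m} = {j. j < i \<and> n < g!j}"
  proof (intro set_eqI iffI)
    fix j assume "j \<in> {j. j < i \<and> n < g!j}"
    then show "j \<in> {j. j < i \<and> n < g!j \<and> g!j \<le> n + m}" using gval[of j] i by auto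
  qed simp
  then show ?thesis using rank[OF gperm blkn _ i(1)] i gval by simp
qed

lemma F1: "i < r \<Longrightarrow> g!i \<le> n \<Longrightarrow> g!i \<le> n1"
proof -
  assume i: "i < r" "g!i \<le> n"
  have "{j. j < i \<and> g!j \<le> n} \<subset> {j. j < r \<and> g!j \<le> n}" using i by auto
  then have "card {j. j < i \<and> g!j \<le> n} < n1" unfolding n1_def
    by (rule psubset_card_mono[rotated]) simp
  then show ?thesis using rank_small[of i] i rle by simp
qed

lemma F2: "r \<le> i \<Longrightarrow> i < n + m \<Longrightarrow> g!i \<le> n \<Longrightarrow> n1 < g!i"
proof -
  assume i: "r \<le> i" "i < n + m" "g!i \<le> n"
  have "{j. j < r \<and> g!j \<le> n} \<subseteq> {j. j < i \<and> g!j \<le> n}" using i by auto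
  then have "n1 \<le> card {j. j < i \<and> g!j \<le> n}" unfolding n1_def
    by (rule card_mono[rotated]) simp
  then show ?thesis using rank_small[of i] i by simp
qed

lemma F3: "i < r \<Longrightarrow> n < g!i \<Longrightarrow> g!i \<le> n + m1"
proof -
  assume i: "i < r" "n < g!i"
  have "{j. j < i \<and> n < g!j} \<subset> {j. j < r \<and> n < g!j}" using i by auto
  then have "card {j. j < i \<and> n < g!j} < m1" unfolding m1_def
    by (rule psubset_card_mono[rotated]) simp
  then show ?thesis using rank_big[of i] i rle by simp
qed

lemma F4: "r \<le> i \<Longrightarrow> i < n + m \<Longrightarrow> n < g!i \<Longrightarrow> n + m1 < g!i"
proof -
  assume i: "r \<le> i" "i < n + m" "n < g!i"
  have "{j. j < r \<and> n < g!j} \<subseteq> {j. j < i \<and> n < g!j}" using i by auto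
  then have "m1 \<le> card {j. j < i \<and> n < g!j}" unfolding m1_def
    by (rule card_mono[rotated]) simp
  then show ?thesis using rank_big[of i] i by simp
qed

end


lemma eps_nth: "k < a + b \<Longrightarrow> eps a b ! k = (if k < b then a + 1 + k else k - b + 1)"
  by (simp add: eps_def nth_append del: upt_Suc)

lemma compw_cancel:
  assumes "is_perm N p" "is_perm N u" "is_perm N u'" "compw p u = compw p u'"
  shows "u = u'"
proof (rule nth_equalityI)
  show "length u = length u'" using assms by (simp add: perm_len)
  fix i assume "i < length u"
  then have i: "i < N" using assms by (simp add: perm_len)
  have l: "length u = N" "length u' = N" using assms by (simp_all add: perm_len)
  have "compw p u ! i = compw p u' ! i" using assms(4) by simp
  then have "p!(u!i - 1) = p!(u'!i - 1)" by (simp add: compw_nth l i)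
  moreover have "u!i - 1 < N" "u'!i - 1 < N" using perm_nth[OF assms(2) i] perm_nth[OF assms(3) i] by auto
  ultimately have "u!i - 1 = u'!i - 1" using perm_inj[OF assms(1)] by blast
  then show "u!i = u'!i" using perm_nth[OF assms(2) i] perm_nth[OF assms(3) i] by linarith
qed

lemma crossw_cancel:
  assumes "crossw a b = crossw a' b'" "length a = length a'"
  shows "a = a' \<and> b = b'"
proof -
  have "a = a'" using arg_cong[OF assms(1), of "take (length a)"] assms(2) by (simp add: crossw_def)
  moreover have "map (\<lambda>j. j + length a) b = map (\<lambda>j. j + length a) b'"
    using arg_cong[OF assms(1), of "drop (length a)"] assms(2) by (simp add: crossw_def)
  then have "b = b'" using inj_map_eq_map[of "\<lambda>j. j + length a" b b'] by (simp add: inj_def)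
  ultimately show ?thesis by simp
qed

context dctx
begin

lemma g1_len[simp]: "length g1 = r" using glen rle by (simp add: g1_def)
lemma g1_nth: "i < r \<Longrightarrow> g1!i = h1 (g!i)" using glen rle by (simp add: g1_def)
lemma g2_len[simp]: "length g2 = n + m - r" using glen by (simp add: g2_def)
lemma g2_nth: "i < n + m - r \<Longrightarrow> g2!i = h2 (g!(r + i))" using glen by (simp add: g2_def)

lemma h1_small: "i < r \<Longrightarrow> g!i \<le> n \<Longrightarrow> h1 (g!i) = g!i \<and> 1 \<le> g!i \<and> g!i \<le> n1"
  using F1 gval rle by (simp add: h1_def)
lemma h1_big: "i < r \<Longrightarrow> n < g!i \<Longrightarrow> h1 (g!i) = g!i - n + n1 \<and> n < g!i \<and> g!i \<le> n + m1"
  using F3 by (simp add: h1_def)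
lemma h2_small: "r \<le> i \<Longrightarrow> i < n + m \<Longrightarrow> g!i \<le> n \<Longrightarrow> h2 (g!i) = g!i - n1 \<and> n1 < g!i \<and> g!i \<le> n"
  using F2 by (simp add: h2_def)
lemma h2_big: "r \<le> i \<Longrightarrow> i < n + m \<Longrightarrow> n < g!i \<Longrightarrow> h2 (g!i) = g!i - n1 - m1 \<and> n + m1 < g!i \<and> g!i \<le> n + m"
  using F4 gval by (simp add: h2_def)

lemma g1_perm: "is_perm r g1"
proof (rule perm_intro)
  show "length g1 = r" by simp
  show "distinct g1" unfolding distinct_conv_nth
  proof (intro allI impI)
    fix i j assume ij: "i < length g1" "j < length g1" "i \<noteq> j"
    then have "g!i \<noteq> g!j" using perm_inj[OF gperm, of i j] rle by auto
    then show "g1!i \<noteq> g1!j" using ij g1_nth h1_small[of i] h1_small[of j] h1_big[of i] h1_big[of j]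
      by (cases "g!i \<le> n"; cases "g!j \<le> n") auto
  qed
  fix i assume i: "i < r"
  show "1 \<le> g1!i \<and> g1!i \<le> r"
    using i g1_nth h1_small[of i] h1_big[of i] nm_sum by (cases "g!i \<le> n") auto
qed

lemma g1_Sh2: "g1 \<in> Sh2 n1 m1"
  unfolding Sh2_iff
proof (intro conjI)
  show "is_perm (n1 + m1) g1" using g1_perm nm_sum by simp
  show "blk 0 n1 g1" unfolding blk_def
  proof (intro allI impI)
    fix i j assume a: "i < j" "j < length g1" "0 < g1!i" "g1!i \<le> n1" "0 < g1!j" "g1!j \<le> n1"
    then have ir: "i < r" "j < r" by simp_all
    have si: "g!i \<le> n" "g!j \<le> n" using a ir g1_nth h1_big[of i] h1_big[of j] by force+
    have "g!i < g!j" using blk0[unfolded blk_def, rule_format, of i j] a(1) ir rle glen si gval[of i] gval[of j]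
      by auto
    then show "g1!i < g1!j" using g1_nth ir h1_small[of i] h1_small[of j] si by simp
  qed
  show "blk n1 (n1 + m1) g1" unfolding blk_def
  proof (intro allI impI)
    fix i j assume a: "i < j" "j < length g1" "n1 < g1!i" "g1!i \<le> n1 + m1" "n1 < g1!j" "g1!j \<le> n1 + m1"
    then have ir: "i < r" "j < r" by simp_all
    have bi: "n < g!i" "n < g!j" using a ir g1_nth h1_small[of i] h1_small[of j] by force+
    have "g!i < g!j" using blkn[unfolded blk_def, rule_format, of i j] a(1) ir rle glen bi gval[of i] gval[of j]
      by auto
    then show "g1!i < g1!j" using g1_nth ir h1_big[of i] h1_big[of j] bi by simp
  qed
qed

lemma g2_perm: "is_perm (n + m - r) g2"
proof (rule perm_intro)
  show "length g2 = n + m - r" by simp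
  show "distinct g2" unfolding distinct_conv_nth
  proof (intro allI impI)
    fix i j assume ij: "i < length g2" "j < length g2" "i \<noteq> j"
    have b: "r+i < n+m" "r+j < n+m" "r \<le> r + i" "r \<le> r + j" using ij rle by simp_all
    have ne: "g!(r+i) \<noteq> g!(r+j)" using perm_inj[OF gperm, of "r+i" "r+j"] b ij by auto
    show "g2!i \<noteq> g2!j"
    proof (cases "g!(r+i) \<le> n"; cases "g!(r+j) \<le> n")
      assume "g!(r+i) \<le> n" "g!(r+j) \<le> n"
      then show ?thesis using ij g2_nth h2_small[OF b(3) b(1)] h2_small[OF b(4) b(2)] ne by auto
    next
      assume "g!(r+i) \<le> n" "\<not> g!(r+j) \<le> n"
      then show ?thesis using ij g2_nth h2_small[OF b(3) b(1)] h2_big[OF b(4) b(2)] by auto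
    next
      assume "\<not> g!(r+i) \<le> n" "g!(r+j) \<le> n"
      then show ?thesis using ij g2_nth h2_big[OF b(3) b(1)] h2_small[OF b(4) b(2)] by auto
    next
      assume "\<not> g!(r+i) \<le> n" "\<not> g!(r+j) \<le> n"
      then have "g2!i = g!(r+i) - n1 - m1" "g2!j = g!(r+j) - n1 - m1" "n+m1 < g!(r+i)" "n+m1 < g!(r+j)"
        using ij g2_nth h2_big[OF b(3) b(1)] h2_big[OF b(4) b(2)] by auto
      show ?thesis
      proof
        assume "g2!i = g2!j"
        then have "g!(r+i) = g!(r+j)" using \<open>g2!i = g!(r+i) - n1 - m1\<close> \<open>g2!j = g!(r+j) - n1 - m1\<close>
          \<open>n+m1 < g!(r+i)\<close> \<open>n+m1 < g!(r+j)\<close> n1_le by linarith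
        then show False using ne by simp
      qed
    qed
  qed
  fix i assume i: "i < n + m - r"
  have b: "r+i < n+m" "r \<le> r + i" using i rle by simp_all
  show "1 \<le> g2!i \<and> g2!i \<le> n + m - r"
    using i g2_nth h2_small[OF b(2) b(1)] h2_big[OF b(2) b(1)] nm_sum n1_le m1_le
    by (cases "g!(r+i) \<le> n") (auto; linarith)+
qed

lemma g2_Sh2: "g2 \<in> Sh2 (n - n1) (m - m1)"
  unfolding Sh2_iff
proof (intro conjI)
  have e: "n - n1 + (m - m1) = n + m - r" using nm_sum n1_le m1_le by simp
  show "is_perm (n - n1 + (m - m1)) g2" using g2_perm e by simp
  show "blk 0 (n - n1) g2" unfolding blk_def
  proof (intro allI impI)
    fix i j assume a: "i < j" "j < length g2" "0 < g2!i" "g2!i \<le> n - n1" "0 < g2!j" "g2!j \<le> n - n1"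
    have b: "r+i < n+m" "r+j < n+m" "r \<le> r + i" "r \<le> r + j" "i < n + m - r" "j < n + m - r"
      using a rle by simp_all
    have si: "g!(r+i) \<le> n" "g!(r+j) \<le> n"
    proof -
      show "g!(r+i) \<le> n"
      proof (rule ccontr)
        assume "\<not> g!(r+i) \<le> n"
        then have "g2!i = g!(r+i) - n1 - m1" "n+m1 < g!(r+i)" using g2_nth[OF b(5)] h2_big[OF b(3) b(1)] by auto
        then show False using a(4) n1_le by linarith
      qed
      show "g!(r+j) \<le> n"
      proof (rule ccontr)
        assume "\<not> g!(r+j) \<le> n"
        then have "g2!j = g!(r+j) - n1 - m1" "n+m1 < g!(r+j)" using g2_nth[OF b(6)] h2_big[OF b(4) b(2)] by auto
        then show False using a(6) n1_le by linarith
      qed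
    qed
    have p: "0 < g!(r+i)" "0 < g!(r+j)" using gval[OF b(1)] gval[OF b(2)] by auto
    have "g!(r+i) < g!(r+j)" using blk0[unfolded blk_def, rule_format, of "r+i" "r+j"] a(1) b(2) glen si p
      by simp
    moreover have "g2!i = g!(r+i) - n1" "n1 < g!(r+i)" using g2_nth[OF b(5)] h2_small[OF b(3) b(1) si(1)] by auto
    moreover have "g2!j = g!(r+j) - n1" using g2_nth[OF b(6)] h2_small[OF b(4) b(2) si(2)] by auto
    ultimately show "g2!i < g2!j" by linarith
  qed
  show "blk (n - n1) (n - n1 + (m - m1)) g2" unfolding blk_def
  proof (intro allI impI)
    fix i j assume a: "i < j" "j < length g2" "n - n1 < g2!i" "g2!i \<le> n - n1 + (m - m1)"
       "n - n1 < g2!j" "g2!j \<le> n - n1 + (m - m1)"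
    have b: "r+i < n+m" "r+j < n+m" "r \<le> r + i" "r \<le> r + j" "i < n + m - r" "j < n + m - r"
      using a rle by simp_all
    have bi: "n < g!(r+i)" "n < g!(r+j)"
    proof -
      show "n < g!(r+i)"
      proof (rule ccontr)
        assume "\<not> n < g!(r+i)"
        then have "g2!i = g!(r+i) - n1" "g!(r+i) \<le> n" using g2_nth[OF b(5)] h2_small[OF b(3) b(1)] by auto
        then show False using a(3) by linarith
      qed
      show "n < g!(r+j)"
      proof (rule ccontr)
        assume "\<not> n < g!(r+j)"
        then have "g2!j = g!(r+j) - n1" "g!(r+j) \<le> n" using g2_nth[OF b(6)] h2_small[OF b(4) b(2)] by auto
        then show False using a(5) by linarith
      qed
    qed
    have p: "g!(r+i) \<le> n + m" "g!(r+j) \<le> n + m" using gval[OF b(1)] gval[OF b(2)] by auto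
    have "g!(r+i) < g!(r+j)" using blkn[unfolded blk_def, rule_format, of "r+i" "r+j"] a(1) b(2) glen bi p
      by simp
    moreover have "g2!i = g!(r+i) - n1 - m1" "n + m1 < g!(r+i)" using g2_nth[OF b(5)] h2_big[OF b(3) b(1) bi(1)] by auto
    moreover have "g2!j = g!(r+j) - n1 - m1" using g2_nth[OF b(6)] h2_big[OF b(4) b(2) bi(2)] by auto
    ultimately show "g2!i < g2!j" using n1_le by linarith
  qed
qed

lemma P_perm: "is_perm (n + m) P"
proof -
  have "is_perm (n1 + (n - n1 + m1) + (m - m1)) P"
    unfolding P_def by (intro crossw_perm idp_perm eps_perm)
  moreover have "n1 + (n - n1 + m1) + (m - m1) = n + m" using n1_le m1_le by simp
  ultimately show ?thesis by simp
qed

lemma P_nth: "q < n + m \<Longrightarrow> P!q = (if q < n1 then q + 1 else if q < n1 + m1 then q - n1 + n + 1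
   else if q < n + m1 then q - m1 + 1 else q + 1)"
proof -
  assume q: "q < n + m"
  have lE: "length (eps (n - n1) m1) = n - n1 + m1" by (simp add: eps_def del: upt_Suc)
  have X: "q < n + m1 \<Longrightarrow> crossw (idp n1) (eps (n - n1) m1) ! q =
     (if q < n1 then q + 1 else eps (n - n1) m1 ! (q - n1) + n1)"
    using n1_le by (simp add: crossw_nth idp_nth lE)
  have E: "q < n + m1 \<Longrightarrow> \<not> q < n1 \<Longrightarrow> eps (n - n1) m1 ! (q - n1) =
     (if q - n1 < m1 then n - n1 + 1 + (q - n1) else q - n1 - m1 + 1)"
    using n1_le by (intro eps_nth) simp
  show ?thesis
  proof (cases "q < n + m1")
    case True
    then have "P!q = crossw (idp n1) (eps (n - n1) m1) ! q"
      using n1_le q unfolding P_def by (simp add: crossw_nth lE)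
    then show ?thesis using X E True n1_le by auto
  next
    case False
    then have "P!q = idp (m - m1) ! (q - (n + m1)) + (n + m1)"
      using n1_le m1_le q unfolding P_def by (simp add: crossw_nth lE)
    then show ?thesis using False q n1_le m1_le by (simp add: idp_nth)
  qed
qed

lemma P_nth1: "q < n1 \<Longrightarrow> P!q = q + 1" using P_nth[of q] n1_le by simp
lemma P_nth2: "n1 \<le> q \<Longrightarrow> q < n1 + m1 \<Longrightarrow> P!q = q - n1 + n + 1" using P_nth[of q] n1_le m1_le by simp
lemma P_nth3: "n1 + m1 \<le> q \<Longrightarrow> q < n + m1 \<Longrightarrow> P!q = q - m1 + 1" using P_nth[of q] n1_le m1_le by simp
lemma P_nth4: "n + m1 \<le> q \<Longrightarrow> q < n + m \<Longrightarrow> P!q = q + 1" using P_nth[of q] n1_le m1_le by simp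

lemma g_eq: "g = compw P (crossw g1 g2)"
proof (rule nth_equalityI)
  show "length g = length (compw P (crossw g1 g2))" using glen rle by simp
  fix i assume "i < length g"
  then have i: "i < n + m" using glen by simp
  show "g!i = compw P (crossw g1 g2) ! i"
  proof (cases "i < r")
    case True
    then have c: "crossw g1 g2 ! i = h1 (g!i)" using rle by (simp add: crossw_nth g1_nth)
    show ?thesis
    proof (cases "g!i \<le> n")
      case True
      then have "crossw g1 g2 ! i = g!i" "1 \<le> g!i" "g!i \<le> n1" using c h1_small[OF \<open>i<r\<close> True] by auto
      moreover have "P!(g!i - 1) = g!i" using P_nth1[of "g!i - 1"] calculation by simp
      ultimately show ?thesis using i rle by (simp add: compw_nth)
    next
      case False
      then have "crossw g1 g2 ! i = g!i - n + n1" "n < g!i" "g!i \<le> n + m1" using c h1_big[OF \<open>i<r\<close>] by auto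
      moreover have "P!(g!i - n + n1 - 1) = g!i" using P_nth2[of "g!i - n + n1 - 1"] calculation by simp
      ultimately show ?thesis using i rle by (simp add: compw_nth)
    qed
  next
    case False
    then have c: "crossw g1 g2 ! i = h2 (g!i) + r" using rle i by (simp add: crossw_nth g2_nth)
    show ?thesis
    proof (cases "g!i \<le> n")
      case True
      then have "crossw g1 g2 ! i = g!i + m1" "n1 < g!i" "g!i \<le> n" using c h2_small[of i] False i nm_sum by auto
      moreover have "P!(g!i + m1 - 1) = g!i" using P_nth3[of "g!i + m1 - 1"] calculation by simp
      ultimately show ?thesis using i rle by (simp add: compw_nth)
    next
      case F2: False
      have hb: "h2 (g!i) = g!i - n1 - m1" "n + m1 < g!i" "g!i \<le> n + m" using h2_big[of i] F2 False i by auto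
      then have "crossw g1 g2 ! i = g!i" "n + m1 < g!i" "g!i \<le> n + m" using c nm_sum n1_le by auto
      moreover have "P!(g!i - 1) = g!i" using P_nth4[of "g!i - 1"] calculation by simp
      ultimately show ?thesis using i rle by (simp add: compw_nth)
    qed
  qed
qed

lemma dec_eq: "dec g n m r = (g1, g2)"
proof -
  have m1e: "r - n1 = m1" using nm_sum by simp
  have "dec g n m r = (THE (a, b). a \<in> Sh2 n1 m1 \<and> b \<in> Sh2 (n - n1) (m - m1) \<and>
       g = compw P (crossw a b))"
    unfolding dec_def n1_of_eq Let_def m1e P_def ..
  also have "\<dots> = (g1, g2)"
  proof (rule the_equality)
    show "case (g1, g2) of (a, b) \<Rightarrow> a \<in> Sh2 n1 m1 \<and> b \<in> Sh2 (n - n1) (m - m1) \<and> g = compw P (crossw a b)"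
      using g1_Sh2 g2_Sh2 g_eq by simp
    fix p assume "case p of (a, b) \<Rightarrow> a \<in> Sh2 n1 m1 \<and> b \<in> Sh2 (n - n1) (m - m1) \<and> g = compw P (crossw a b)"
    then obtain a b where p: "p = (a, b)" "a \<in> Sh2 n1 m1" "b \<in> Sh2 (n - n1) (m - m1)" "g = compw P (crossw a b)"
      by auto
    have e: "n1 + m1 + (n - n1 + (m - m1)) = n + m" using n1_le m1_le by simp
    have pa: "is_perm (n + m) (crossw a b)" using crossw_perm[of "n1+m1" a "n - n1 + (m - m1)" b] p e
      by (simp add: Sh2_iff)
    have pg: "is_perm (n + m) (crossw g1 g2)" using crossw_perm[of "n1+m1" g1 "n - n1 + (m - m1)" g2]
        g1_Sh2 g2_Sh2 e by (simp add: Sh2_iff)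
    have "crossw a b = crossw g1 g2" using compw_cancel[OF P_perm pa pg] p g_eq by simp
    moreover have "length a = length g1" using p(2) nm_sum by (simp add: Sh2_iff perm_len)
    ultimately show "p = (g1, g2)" using crossw_cancel p by blast
  qed
  finally show ?thesis .
qed

end


definition cmb :: "word \<Rightarrow> word \<Rightarrow> nat \<Rightarrow> nat + nat \<Rightarrow> nat" where
  "cmb a c k x = (case x of Inl i \<Rightarrow> a!i | Inr j \<Rightarrow> c!j + k)"

definition valid :: "word \<Rightarrow> word \<Rightarrow> nat + nat \<Rightarrow> bool" where
  "valid a c x = (case x of Inl i \<Rightarrow> i < length a | Inr j \<Rightarrow> j < length c)"

lemma cmb_iso:
  assumes "oiso s' a'" "oiso t' c'" "\<forall>x\<in>set s'. x \<le> K" "\<forall>x\<in>set t'. 1 \<le> x"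
    "\<forall>x\<in>set a'. x \<le> K'" "\<forall>x\<in>set c'. 1 \<le> x" "valid s' t' x" "valid s' t' y"
  shows "(cmb s' t' K x < cmb s' t' K y) = (cmb a' c' K' x < cmb a' c' K' y)"
proof -
  have l: "length s' = length a'" "length t' = length c'" using assms(1,2) by (simp_all add: oiso_def)
  show ?thesis
  proof (cases x; cases y)
    fix i j assume "x = Inl i" "y = Inl j"
    then show ?thesis using assms(1,7,8) by (simp add: cmb_def valid_def oiso_def)
  next
    fix i j assume "x = Inr i" "y = Inr j"
    then show ?thesis using assms(2,7,8) by (simp add: cmb_def valid_def oiso_def)
  next
    fix i j assume xy: "x = Inl i" "y = Inr j"
    then have "s'!i \<le> K" "1 \<le> t'!j" "a'!i \<le> K'" "1 \<le> c'!j"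
      using assms(3-8) l by (auto simp: valid_def)
    then show ?thesis using xy by (simp add: cmb_def)
  next
    fix i j assume xy: "x = Inr i" "y = Inl j"
    then have "s'!j \<le> K" "1 \<le> t'!i" "a'!j \<le> K'" "1 \<le> c'!i"
      using assms(3-8) l by (auto simp: valid_def)
    then show ?thesis using xy by (simp add: cmb_def)
  qed
qed

lemma oiso_by_cmb:
  assumes "length u = L" "length v = L"
    "\<And>i. i < L \<Longrightarrow> u!i = cmb s' t' K (kap i) \<and> v!i = cmb a' c' K' (kap i) \<and> valid s' t' (kap i)"
    "oiso s' a'" "oiso t' c'" "\<forall>x\<in>set s'. x \<le> K" "\<forall>x\<in>set t'. 1 \<le> x"
    "\<forall>x\<in>set a'. x \<le> K'" "\<forall>x\<in>set c'. 1 \<le> x"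
  shows "oiso u v"
  unfolding oiso_def
proof (intro conjI allI impI)
  show "length u = length v" using assms by simp
  fix i j assume "i < length u" "j < length u"
  then show "(u!i < u!j) = (v!i < v!j)"
    using assms(3)[of i] assms(3)[of j] cmb_iso[OF assms(4-9)] assms(1) by auto
qed

lemma perm_le: "is_perm n s \<Longrightarrow> \<forall>x\<in>set s. x \<le> n" by (simp add: is_perm_def)
lemma perm_ge: "is_perm n s \<Longrightarrow> \<forall>x\<in>set s. 1 \<le> x" by (simp add: is_perm_def)

context dctx
begin

lemma C1:
  assumes s: "is_perm n s" and t: "is_perm m t"
  shows "stdw (take r (compw (crossw s t) g)) = compw (crossw (stdw (take n1 s)) (stdw (take m1 t))) g1"
proof -
  let ?w = "compw (crossw s t) g"
  let ?a = "stdw (take n1 s)" and ?c = "stdw (take m1 t)"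
  have wp: "is_perm (n + m) ?w" by (rule compw_perm[OF crossw_perm[OF s t] gperm])
  have dw: "distinct (take r ?w)" using perm_distinct[OF wp] by simp
  have ls: "length (take n1 s) = n1" using s n1_le by (simp add: perm_len)
  have lt: "length (take m1 t) = m1" using t m1_le by (simp add: perm_len)
  have ap: "is_perm n1 ?a" using stdw_is_perm[of "take n1 s"] perm_distinct[OF s] ls by simp
  have cp: "is_perm m1 ?c" using stdw_is_perm[of "take m1 t"] perm_distinct[OF t] lt by simp
  have Yp: "is_perm r (compw (crossw ?a ?c) g1)"
    using compw_perm[OF crossw_perm[OF ap cp]] g1_perm nm_sum by simp
  let ?kap = "\<lambda>i. if g!i \<le> n then Inl (g!i - 1) else Inr (g!i - n - 1)"
  have "oiso (take r ?w) (compw (crossw ?a ?c) g1)"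
  proof (rule oiso_by_cmb[where kap = ?kap])
    show "length (take r ?w) = r" using rle glen by simp
    show "length (compw (crossw ?a ?c) g1) = r" by simp
    show "oiso (take n1 s) ?a" "oiso (take m1 t) ?c" by (rule oiso_stdw)+
    show "\<forall>x\<in>set (take n1 s). x \<le> n" using perm_le[OF s] by (meson in_set_takeD)
    show "\<forall>x\<in>set (take m1 t). 1 \<le> x" using perm_ge[OF t] by (meson in_set_takeD)
    show "\<forall>x\<in>set ?a. x \<le> n1" using perm_le[OF ap] .
    show "\<forall>x\<in>set ?c. 1 \<le> x" using perm_ge[OF cp] .
    fix i assume i: "i < r"
    then have iN: "i < n + m" using rle by simp
    have la: "length ?a = n1" "length ?c = m1" using ls lt by simp_all
    show "take r ?w ! i = cmb (take n1 s) (take m1 t) n (?kap i) \<and>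
          compw (crossw ?a ?c) g1 ! i = cmb ?a ?c n1 (?kap i) \<and> valid (take n1 s) (take m1 t) (?kap i)"
    proof (cases "g!i \<le> n")
      case True
      then have h: "g1!i = g!i" "1 \<le> g!i" "g!i \<le> n1" using h1_small[OF i True] g1_nth[OF i] by auto
      have "g!i - 1 < n" using h n1_le by linarith
      then have "take r ?w ! i = s!(g!i - 1)" using i iN glen h n1_le s t
        by (simp add: compw_nth crossw_nth perm_len)
      moreover have "compw (crossw ?a ?c) g1 ! i = ?a!(g!i - 1)"
      proof -
        have "g!i - 1 < n1" using h by linarith
        then show ?thesis using i h la by (simp add: compw_nth crossw_nth)
      qed
      moreover have "g!i - 1 < n1" using h by linarith
      ultimately show ?thesis using True h ls by (simp add: cmb_def valid_def)
    next
      case False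
      then have h: "g1!i = g!i - n + n1" "n < g!i" "g!i \<le> n + m1" using h1_big[OF i] g1_nth[OF i] by auto
      have x1: "\<not> g!i - 1 < n" "g!i - 1 < n + m" "g!i - 1 - n = g!i - n - 1"
        "\<not> g1!i - 1 < n1" "g1!i - 1 < n1 + m1" "g1!i - 1 - n1 = g!i - n - 1" "g!i - n - 1 < m1"
        using h m1_le by linarith+
      have sl: "length s = n" "length t = m" using s t by (simp_all add: perm_len)
      have "take r ?w ! i = ?w ! i" using i by simp
      also have "\<dots> = crossw s t ! (g!i - 1)" using iN glen by (simp add: compw_nth)
      also have "\<dots> = t!(g!i - n - 1) + n" using crossw_nth[of "g!i - 1" s t] x1 sl by simp
      finally have A: "take r ?w ! i = t!(g!i - n - 1) + n" .
      have "compw (crossw ?a ?c) g1 ! i = crossw ?a ?c ! (g1!i - 1)" using i by (simp add: compw_nth)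
      also have "\<dots> = ?c!(g!i - n - 1) + n1" using crossw_nth[of "g1!i - 1" ?a ?c] x1 la by simp
      finally have B: "compw (crossw ?a ?c) g1 ! i = ?c!(g!i - n - 1) + n1" .
      show ?thesis using A B False x1 lt by (simp add: cmb_def valid_def)
    qed
  qed
  then have "stdw (take r ?w) = stdw (compw (crossw ?a ?c) g1)" using oiso_std_eq dw by blast
  also have "\<dots> = compw (crossw ?a ?c) g1" using stdw_perm_id[OF Yp] .
  finally show ?thesis .
qed

lemma C2:
  assumes s: "is_perm n s" and t: "is_perm m t"
  shows "stdw (drop r (compw (crossw s t) g)) = compw (crossw (stdw (drop n1 s)) (stdw (drop m1 t))) g2"
proof -
  let ?w = "compw (crossw s t) g"
  let ?a = "stdw (drop n1 s)" and ?c = "stdw (drop m1 t)"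
  have wp: "is_perm (n + m) ?w" by (rule compw_perm[OF crossw_perm[OF s t] gperm])
  have dw: "distinct (drop r ?w)" using perm_distinct[OF wp] by simp
  have ls: "length (drop n1 s) = n - n1" using s by (simp add: perm_len)
  have lt: "length (drop m1 t) = m - m1" using t by (simp add: perm_len)
  have ap: "is_perm (n - n1) ?a" using stdw_is_perm[of "drop n1 s"] perm_distinct[OF s] ls by simp
  have cp: "is_perm (m - m1) ?c" using stdw_is_perm[of "drop m1 t"] perm_distinct[OF t] lt by simp
  have e: "n - n1 + (m - m1) = n + m - r" using nm_sum n1_le m1_le by simp
  have Yp: "is_perm (n + m - r) (compw (crossw ?a ?c) g2)"
    using compw_perm[OF crossw_perm[OF ap cp]] g2_perm e by simp
  let ?kap = "\<lambda>i. if g!(r+i) \<le> n then Inl (g!(r+i) - n1 - 1) else Inr (g!(r+i) - n - m1 - 1)"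
  have "oiso (drop r ?w) (compw (crossw ?a ?c) g2)"
  proof (rule oiso_by_cmb[where kap = ?kap])
    show "length (drop r ?w) = n + m - r" using rle glen by simp
    show "length (compw (crossw ?a ?c) g2) = n + m - r" by simp
    show "oiso (drop n1 s) ?a" "oiso (drop m1 t) ?c" by (rule oiso_stdw)+
    show "\<forall>x\<in>set (drop n1 s). x \<le> n" using perm_le[OF s] by (meson in_set_dropD)
    show "\<forall>x\<in>set (drop m1 t). 1 \<le> x" using perm_ge[OF t] by (meson in_set_dropD)
    show "\<forall>x\<in>set ?a. x \<le> n - n1" using perm_le[OF ap] .
    show "\<forall>x\<in>set ?c. 1 \<le> x" using perm_ge[OF cp] .
    fix i assume i: "i < n + m - r"
    then have iN: "r + i < n + m" "r \<le> r + i" using rle by simp_all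
    have la: "length ?a = n - n1" "length ?c = m - m1" using ls lt by simp_all
    show "drop r ?w ! i = cmb (drop n1 s) (drop m1 t) n (?kap i) \<and>
          compw (crossw ?a ?c) g2 ! i = cmb ?a ?c (n - n1) (?kap i) \<and> valid (drop n1 s) (drop m1 t) (?kap i)"
    proof (cases "g!(r+i) \<le> n")
      case True
      then have h: "g2!i = g!(r+i) - n1" "n1 < g!(r+i)" "g!(r+i) \<le> n"
        using h2_small[OF iN(2) iN(1) True] g2_nth[OF i] by auto
      have x1: "g!(r+i) - 1 < n" "g!(r+i) - n1 - 1 < n - n1" "n1 + (g!(r+i) - n1 - 1) = g!(r+i) - 1"
        "g!(r+i) - 1 < n + m" "g2!i - 1 = g!(r+i) - n1 - 1"
        "g!(r+i) - n1 - 1 < n + m - (n1 + m1)" "g!(r+i) - n1 - 1 < n - n1 + (m - m1)"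
        using h n1_le m1_le by linarith+
      have "drop r ?w ! i = ?w ! (r+i)" using iN glen by simp
      also have "\<dots> = crossw s t ! (g!(r+i) - 1)" using iN glen by (simp add: compw_nth)
      also have "\<dots> = s ! (g!(r+i) - 1)" using x1 s t by (simp add: crossw_nth perm_len)
      also have "\<dots> = drop n1 s ! (g!(r+i) - n1 - 1)" using x1 s n1_le by (simp add: perm_len)
      finally have A: "drop r ?w ! i = drop n1 s ! (g!(r+i) - n1 - 1)" .
      have "compw (crossw ?a ?c) g2 ! i = crossw ?a ?c ! (g2!i - 1)" using i by (simp add: compw_nth)
      also have "\<dots> = ?a ! (g!(r+i) - n1 - 1)" using crossw_nth[of "g2!i - 1" ?a ?c] x1 la m1_le by simp
      finally have B: "compw (crossw ?a ?c) g2 ! i = ?a ! (g!(r+i) - n1 - 1)" .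
      show ?thesis using A B True x1(2) ls by (simp add: cmb_def valid_def)
    next
      case False
      then have h: "g2!i = g!(r+i) - n1 - m1" "n + m1 < g!(r+i)" "g!(r+i) \<le> n + m"
        using h2_big[OF iN(2) iN(1)] g2_nth[OF i] by auto
      have x1: "\<not> g!(r+i) - 1 < n" "g!(r+i) - 1 - n = m1 + (g!(r+i) - n - m1 - 1)"
        "g!(r+i) - n - m1 - 1 < m - m1" "g!(r+i) - 1 < n + m"
        "g2!i - 1 = (n - n1) + (g!(r+i) - n - m1 - 1)" "g!(r+i) - n - 1 = g!(r+i) - 1 - n"
        "n - n1 + (g!(r+i) - n - m1 - 1) < n - n1 + m - m1"
        using h n1_le m1_le by linarith+
      have "drop r ?w ! i = ?w ! (r+i)" using iN glen by simp
      also have "\<dots> = crossw s t ! (g!(r+i) - 1)" using iN glen by (simp add: compw_nth)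
      also have "\<dots> = t ! (g!(r+i) - 1 - n) + n" using x1 s t by (simp add: crossw_nth perm_len)
      also have "\<dots> = drop m1 t ! (g!(r+i) - n - m1 - 1) + n" using x1 t m1_le by (simp add: perm_len)
      finally have A: "drop r ?w ! i = drop m1 t ! (g!(r+i) - n - m1 - 1) + n" .
      have "compw (crossw ?a ?c) g2 ! i = crossw ?a ?c ! (g2!i - 1)" using i by (simp add: compw_nth)
      also have "\<dots> = ?c ! (g!(r+i) - n - m1 - 1) + (n - n1)" using crossw_nth[of "g2!i - 1" ?a ?c] x1 la m1_le by simp
      finally have B: "compw (crossw ?a ?c) g2 ! i = ?c ! (g!(r+i) - n - m1 - 1) + (n - n1)" .
      show ?thesis using A B False x1 lt by (simp add: cmb_def valid_def)
    qed
  qed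
  then have "stdw (drop r ?w) = stdw (compw (crossw ?a ?c) g2)" using oiso_std_eq dw by blast
  also have "\<dots> = compw (crossw ?a ?c) g2" using stdw_perm_id[OF Yp] .
  finally show ?thesis .
qed

end


lemma lin_expand:
  fixes F :: "'a \<Rightarrow> 'k::comm_monoid_add \<Rightarrow> 'b::ab_group_add"
  assumes "\<And>p. addf (F p)"
  shows "lin F (\<Sum>i\<in>I. Poly_Mapping.single (p i) (\<alpha> i)) = (\<Sum>i\<in>I. F (p i) (\<alpha> i))"
  by (simp add: lin_sum lin_single assms)

lemma addf_single_lmult: "addf (\<lambda>c. Poly_Mapping.single k ((e::'k::field) * c))"
  by (simp add: addf_def single_add distrib_left)

lemma addf_if0: "addf f \<Longrightarrow> addf (\<lambda>c. if P then f c else (0::'b::monoid_add))"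
  by (simp add: addf_def)

lemma addf_rmult: "addf f \<Longrightarrow> addf (\<lambda>a. f (a * (c::'k::field)) :: 'b::ab_group_add)"
  by (simp add: addf_def distrib_right)

lemma bil_expand:
  fixes G :: "'a \<Rightarrow> 'c \<Rightarrow> 'k::field \<Rightarrow> 'b::ab_group_add"
  assumes "\<And>p q. addf (G p q)"
  shows "lin (\<lambda>p a. lin (\<lambda>q b. G p q (a * b)) (\<Sum>j\<in>J. Poly_Mapping.single (q j) (\<beta> j)))
            (\<Sum>i\<in>I. Poly_Mapping.single (p i) (\<alpha> i))
       = (\<Sum>i\<in>I. \<Sum>j\<in>J. G (p i) (q j) (\<alpha> i * \<beta> j))"
proof -
  have inner: "lin (\<lambda>q' b. G p' q' (a * b)) (\<Sum>j\<in>J. Poly_Mapping.single (q j) (\<beta> j))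
      = (\<Sum>j\<in>J. G p' (q j) (a * \<beta> j))" for p' a
    by (rule lin_expand) (rule addf_lin_outer, rule assms)
  have "lin (\<lambda>p a. \<Sum>j\<in>J. G p (q j) (a * \<beta> j)) (\<Sum>i\<in>I. Poly_Mapping.single (p i) (\<alpha> i))
     = (\<Sum>i\<in>I. \<Sum>j\<in>J. G (p i) (q j) (\<alpha> i * \<beta> j))"
    by (rule lin_expand) (rule addf_sum, rule addf_rmult, rule assms)
  then show ?thesis by (simp add: inner)
qed

lemma shprod_expand_right:
  "shprod g x (\<Sum>j\<in>J. Poly_Mapping.single (q j) (\<beta> j)) =
   (\<Sum>s\<in>Poly_Mapping.keys x. \<Sum>j\<in>J. Poly_Mapping.single (compw (crossw s (q j)) g) (Poly_Mapping.lookup x s * \<beta> j))"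
proof -
  have "shprod g x y = (\<Sum>s\<in>Poly_Mapping.keys x. lin (\<lambda>t b. Poly_Mapping.single (compw (crossw s t) g) (Poly_Mapping.lookup x s * b)) y)" for y
    by (simp add: shprod_def lin_def)
  moreover have "lin (\<lambda>t b. Poly_Mapping.single (compw (crossw s t) g) (Poly_Mapping.lookup x s * b)) (\<Sum>j\<in>J. Poly_Mapping.single (q j) (\<beta> j))
     = (\<Sum>j\<in>J. Poly_Mapping.single (compw (crossw s (q j)) g) (Poly_Mapping.lookup x s * \<beta> j))" for s
    by (rule lin_expand) (rule addf_single_lmult)
  ultimately show ?thesis by simp
qed

lemma shprod_expand_left:
  "shprod g (\<Sum>i\<in>I. Poly_Mapping.single (p i) (\<alpha> i)) y =
   (\<Sum>i\<in>I. \<Sum>t\<in>Poly_Mapping.keys y. Poly_Mapping.single (compw (crossw (p i) t) g) (\<alpha> i * Poly_Mapping.lookup y t))"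
proof -
  have "shprod g x y = lin (\<lambda>s a. \<Sum>t\<in>Poly_Mapping.keys y. Poly_Mapping.single (compw (crossw s t) g) (a * Poly_Mapping.lookup y t)) x" for x
    by (simp add: shprod_def lin_def)
  moreover have "lin (\<lambda>s a. \<Sum>t\<in>Poly_Mapping.keys y. Poly_Mapping.single (compw (crossw s t) g) (a * Poly_Mapping.lookup y t)) (\<Sum>i\<in>I. Poly_Mapping.single (p i) (\<alpha> i))
     = (\<Sum>i\<in>I. \<Sum>t\<in>Poly_Mapping.keys y. Poly_Mapping.single (compw (crossw (p i) t) g) (\<alpha> i * Poly_Mapping.lookup y t))"
    by (rule lin_expand) (rule addf_sum, rule addf_single_mult)
  ultimately show ?thesis by simp
qed

lemma shprod_pairs:
  "shprod g x y = (\<Sum>st\<in>Poly_Mapping.keys x \<times> Poly_Mapping.keys y.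
      Poly_Mapping.single (compw (crossw (fst st) (snd st)) g) (Poly_Mapping.lookup x (fst st) * Poly_Mapping.lookup y (snd st)))"
  by (simp add: shprod_def sum.cartesian_product split_def)

lemma assoc_word:
  assumes s: "is_perm n s" and t: "is_perm m t" and u: "is_perm r u"
    and g: "is_perm (n + (m + r)) g" and d: "is_perm (m + r) d"
    and s': "is_perm (n + m) s'" and l: "is_perm (n + m + r) l"
    and e: "compw (crossw (idp n) d) g = compw (crossw s' (idp r)) l"
  shows "compw (crossw s (compw (crossw t u) d)) g = compw (crossw (compw (crossw s t) s') u) l"
proof -
  have ls: "length s = n" "length t = m" "length u = r" "length d = m + r" "length s' = n + m"
    using assms by (simp_all add: perm_len)
  have "crossw s (compw (crossw t u) d) = crossw (compw s (idp n)) (compw (crossw t u) d)"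
    using compw_idp_right[of s n] ls by simp
  also have "\<dots> = compw (crossw s (crossw t u)) (crossw (idp n) d)"
    by (rule crossw_compw) (use ls perm_vals[OF idp_perm[of n]] perm_vals[OF d] in auto)
  finally have L: "compw (crossw s (compw (crossw t u) d)) g = compw (crossw s (crossw t u)) (compw (crossw (idp n) d) g)"
    using compw_assoc[of g "crossw (idp n) d" "crossw s (crossw t u)"] perm_vals[OF g] ls by simp
  have "crossw (compw (crossw s t) s') u = crossw (compw (crossw s t) s') (compw u (idp r))"
    using compw_idp_right[of u r] ls by simp
  also have "\<dots> = compw (crossw (crossw s t) u) (crossw s' (idp r))"
    by (rule crossw_compw) (use ls perm_vals[OF idp_perm[of r]] perm_vals[OF s'] in auto)
  finally have R: "compw (crossw (compw (crossw s t) s') u) l = compw (crossw (crossw s t) u) (compw (crossw s' (idp r)) l)"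
    using compw_assoc[of l "crossw s' (idp r)" "crossw (crossw s t) u"] perm_vals[OF l] ls by simp
  show ?thesis using L R e by (simp add: crossw_assoc)
qed


lemma keys_shprod:
  "Poly_Mapping.keys (shprod g x y) \<subseteq>
     {compw (crossw s t) g | s t. s \<in> Poly_Mapping.keys x \<and> t \<in> Poly_Mapping.keys y}"
proof -
  have "Poly_Mapping.keys (shprod g x y) \<subseteq> (\<Union>s\<in>Poly_Mapping.keys x. Poly_Mapping.keys (\<Sum>t\<in>Poly_Mapping.keys y.
      Poly_Mapping.single (compw (crossw s t) g) (Poly_Mapping.lookup x s * Poly_Mapping.lookup y t)))"
    unfolding shprod_def by (rule keys_sum)
  also have "\<dots> \<subseteq> (\<Union>s\<in>Poly_Mapping.keys x. \<Union>t\<in>Poly_Mapping.keys y.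
      Poly_Mapping.keys (Poly_Mapping.single (compw (crossw s t) g) (Poly_Mapping.lookup x s * Poly_Mapping.lookup y t)))"
    by (rule UN_mono, rule order.refl, rule keys_sum)
  also have "\<dots> \<subseteq> {compw (crossw s t) g | s t. s \<in> Poly_Mapping.keys x \<and> t \<in> Poly_Mapping.keys y}"
    by auto
  finally show ?thesis .
qed

lemma part1:
  assumes "inA n (x :: word \<Rightarrow>\<^sub>0 'k::field)" "inA m y" "g \<in> Sh2 n m"
  shows "inA (n + m) (shprod g x y)"
  unfolding inA_def
proof
  fix w assume "w \<in> Poly_Mapping.keys (shprod g x y)"
  then obtain s t where st: "w = compw (crossw s t) g" "s \<in> Poly_Mapping.keys x" "t \<in> Poly_Mapping.keys y"
    using keys_shprod by blast
  then have "1 \<le> n" "is_perm n s" "is_perm m t" using assms by (auto simp: inA_def)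
  moreover have "is_perm (n + m) g" using assms(3) by (simp add: Sh2_iff)
  ultimately show "1 \<le> n + m \<and> is_perm (n + m) w" using st compw_perm crossw_perm by auto
qed

lemma sum_pairs: "(\<Sum>ab\<in>A \<times> B. H (fst ab) (snd ab)) = (\<Sum>a\<in>A. \<Sum>b\<in>B. H a b)"
  by (simp add: sum.cartesian_product split_def)

lemma part2:
  fixes x y z :: "word \<Rightarrow>\<^sub>0 'k::field"
  assumes x: "inA n x" and y: "inA m y" and z: "inA r z"
    and g: "g \<in> Sh2 n (m + r)" and d: "d \<in> Sh2 m r" and s: "s \<in> Sh2 n m" and l: "l \<in> Sh2 (n + m) r"
    and e: "compw (crossw (idp n) d) g = compw (crossw s (idp r)) l"
  shows "shprod g x (shprod d y z) = shprod l (shprod s x y) z"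
proof -
  let ?X = "Poly_Mapping.keys x" and ?Y = "Poly_Mapping.keys y" and ?Z = "Poly_Mapping.keys z"
  let ?lx = "Poly_Mapping.lookup x" and ?ly = "Poly_Mapping.lookup y" and ?lz = "Poly_Mapping.lookup z"
  have "shprod g x (shprod d y z) = (\<Sum>a\<in>?X. \<Sum>tu\<in>?Y \<times> ?Z.
     Poly_Mapping.single (compw (crossw a (compw (crossw (fst tu) (snd tu)) d)) g) (?lx a * (?ly (fst tu) * ?lz (snd tu))))"
    by (simp only: shprod_pairs[of d y z] shprod_expand_right)
  also have "\<dots> = (\<Sum>a\<in>?X. \<Sum>b\<in>?Y. \<Sum>c\<in>?Z.
     Poly_Mapping.single (compw (crossw a (compw (crossw b c) d)) g) (?lx a * (?ly b * ?lz c)))"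
    by (intro sum.cong refl) (simp add: sum.cartesian_product split_def)
  also have "\<dots> = (\<Sum>a\<in>?X. \<Sum>b\<in>?Y. \<Sum>c\<in>?Z.
     Poly_Mapping.single (compw (crossw (compw (crossw a b) s) c) l) ((?lx a * ?ly b) * ?lz c))"
  proof (intro sum.cong refl)
    fix a b c assume abc: "a \<in> ?X" "b \<in> ?Y" "c \<in> ?Z"
    then have "is_perm n a" "is_perm m b" "is_perm r c" using x y z by (auto simp: inA_def)
    then have "compw (crossw a (compw (crossw b c) d)) g = compw (crossw (compw (crossw a b) s) c) l"
      using assoc_word[OF _ _ _ _ _ _ _ e] g d s l by (simp add: Sh2_iff add.assoc)
    then show "Poly_Mapping.single (compw (crossw a (compw (crossw b c) d)) g) (?lx a * (?ly b * ?lz c)) =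
      Poly_Mapping.single (compw (crossw (compw (crossw a b) s) c) l) ((?lx a * ?ly b) * ?lz c)"
      by (simp add: mult.assoc)
  qed
  also have "\<dots> = (\<Sum>ab\<in>?X \<times> ?Y. \<Sum>c\<in>?Z.
     Poly_Mapping.single (compw (crossw (compw (crossw (fst ab) (snd ab)) s) c) l) ((?lx (fst ab) * ?ly (snd ab)) * ?lz c))"
    by (rule sum_pairs[of "\<lambda>a b. \<Sum>c\<in>?Z. Poly_Mapping.single (compw (crossw (compw (crossw a b) s) c) l) ((?lx a * ?ly b) * ?lz c)" ?X ?Y, symmetric])
  also have "\<dots> = shprod l (shprod s x y) z"
    by (simp only: shprod_pairs[of s x y] shprod_expand_left)
  finally show ?thesis .
qed

lemma DeltaMR_keys:
  "Poly_Mapping.keys (DeltaMR x) \<subseteq> {(stdw (take r s), stdw (drop r s)) | s r. s \<in> Poly_Mapping.keys x \<and> r \<in> {1..<length s}}"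
proof -
  have "Poly_Mapping.keys (DeltaMR x) \<subseteq> (\<Union>s\<in>Poly_Mapping.keys x. Poly_Mapping.keys (\<Sum>r\<in>{1..<length s}.
      Poly_Mapping.single (stdw (take r s), stdw (drop r s)) (Poly_Mapping.lookup x s)))"
    unfolding DeltaMR_def by (rule keys_sum)
  also have "\<dots> \<subseteq> (\<Union>s\<in>Poly_Mapping.keys x. \<Union>r\<in>{1..<length s}.
      Poly_Mapping.keys (Poly_Mapping.single (stdw (take r s), stdw (drop r s)) (Poly_Mapping.lookup x s)))"
    by (rule UN_mono, rule order.refl, rule keys_sum)
  also have "\<dots> \<subseteq> {(stdw (take r s), stdw (drop r s)) | s r. s \<in> Poly_Mapping.keys x \<and> r \<in> {1..<length s}}"
    by (auto split: if_splits) blast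
  finally show ?thesis .
qed

lemma part3:
  assumes "inA n (x :: word \<Rightarrow>\<^sub>0 'k::field)"
  shows "\<forall>(u, v)\<in>Poly_Mapping.keys (DeltaMR x). \<exists>i. 1 \<le> i \<and> i \<le> n - 1 \<and> is_perm i u \<and> is_perm (n - i) v"
proof (clarify)
  fix u v assume "(u, v) \<in> Poly_Mapping.keys (DeltaMR x)"
  then obtain s r where sr: "u = stdw (take r s)" "v = stdw (drop r s)" "s \<in> Poly_Mapping.keys x" "r \<in> {1..<length s}"
    using DeltaMR_keys by blast
  then have p: "is_perm n s" using assms by (auto simp: inA_def)
  then have l: "length s = n" by (simp add: perm_len)
  have "is_perm r u" using stdw_is_perm[of "take r s"] perm_distinct[OF p] sr l by simp
  moreover have "is_perm (n - r) v" using stdw_is_perm[of "drop r s"] perm_distinct[OF p] sr l by simp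
  moreover have "1 \<le> r" "r \<le> n - 1" using sr l by auto
  ultimately show "\<exists>i. 1 \<le> i \<and> i \<le> n - 1 \<and> is_perm i u \<and> is_perm (n - i) v" by blast
qed


abbreviation T :: "word \<Rightarrow> nat \<Rightarrow> word \<times> word" where
  "T s r \<equiv> (stdw (take r s), stdw (drop r s))"

lemma tri:
  fixes F :: "nat \<Rightarrow> nat \<Rightarrow> 'b::comm_monoid_add"
  shows "(\<Sum>r\<in>{1..<n}. \<Sum>i\<in>{1..<r}. F i r) = (\<Sum>r\<in>{1..<n}. \<Sum>j\<in>{1..<n - r}. F r (r + j))"
proof -
  have "(\<Sum>r\<in>{1..<n}. \<Sum>i\<in>{1..<r}. F i r) = (\<Sum>(r, i)\<in>Sigma {1..<n} (\<lambda>r. {1..<r}). F i r)"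
    by (rule sum.Sigma) auto
  also have "\<dots> = (\<Sum>(r, j)\<in>Sigma {1..<n} (\<lambda>r. {1..<n - r}). F r (r + j))"
    by (rule sum.reindex_bij_witness[where i="\<lambda>(r, j). (r + j, r)" and j="\<lambda>(r, i). (i, r - i)"]) auto
  also have "\<dots> = (\<Sum>r\<in>{1..<n}. \<Sum>j\<in>{1..<n - r}. F r (r + j))"
    by (rule sum.Sigma[symmetric]) auto
  finally show ?thesis .
qed

lemma DeltaMR_single1: "DeltaMR (Poly_Mapping.single u (1::'k::field)) = (\<Sum>r\<in>{1..<length u}. Poly_Mapping.single (T u r) 1)"
  by (simp add: DeltaMR_def)

lemma DeltaMR_sigma:
  "DeltaMR x = (\<Sum>sr\<in>Sigma (Poly_Mapping.keys x) (\<lambda>s. {1..<length s}).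
      Poly_Mapping.single (T (fst sr) (snd sr)) (Poly_Mapping.lookup x (fst sr)))"
  unfolding DeltaMR_def by (subst sum.Sigma) (auto simp: split_def)

lemma Delta_id_lin:
  "Delta_id t = lin (\<lambda>p c. lin (\<lambda>q e. Poly_Mapping.single (fst q, snd q, snd p) (c * e))
      (DeltaMR (Poly_Mapping.single (fst p) (1::'k::field)))) t"
  by (simp add: Delta_id_def lin_def split_def)

lemma id_Delta_lin:
  "id_Delta t = lin (\<lambda>p c. lin (\<lambda>q e. Poly_Mapping.single (fst p, fst q, snd q) (c * e))
      (DeltaMR (Poly_Mapping.single (snd p) (1::'k::field)))) t"
  by (simp add: id_Delta_def lin_def split_def)

lemma lin_expand2:
  fixes F :: "'a \<Rightarrow> 'k::comm_monoid_add \<Rightarrow> 'b::ab_group_add"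
  assumes "\<And>p. addf (F p)"
  shows "lin F (\<Sum>i\<in>I. \<Sum>j\<in>J i. Poly_Mapping.single (p i j) (\<alpha> i j)) = (\<Sum>i\<in>I. \<Sum>j\<in>J i. F (p i j) (\<alpha> i j))"
  by (simp add: lin_sum lin_single assms)

lemma part4:
  fixes x :: "word \<Rightarrow>\<^sub>0 'k::field"
  assumes "inAll x"
  shows "Delta_id (DeltaMR x) = id_Delta (DeltaMR x)"
proof -
  let ?X = "Poly_Mapping.keys x" and ?lx = "Poly_Mapping.lookup x"
  have dis: "\<And>s. s \<in> ?X \<Longrightarrow> distinct s" using assms by (auto simp: inAll_def perm_distinct)
  have a1: "addf (\<lambda>c. lin (\<lambda>q e. Poly_Mapping.single (fst q, snd q, snd p) (c * e))
      (DeltaMR (Poly_Mapping.single (fst p) (1::'k))))" for p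
    by (rule addf_lin_inner) (rule addf_single)
  have a2: "addf (\<lambda>c. lin (\<lambda>q e. Poly_Mapping.single (fst p, fst q, snd q) (c * e))
      (DeltaMR (Poly_Mapping.single (snd p) (1::'k))))" for p
    by (rule addf_lin_inner) (rule addf_single)
  have e1: "lin (\<lambda>q e. Poly_Mapping.single (fst q, snd q, v) (c * e)) (DeltaMR (Poly_Mapping.single u (1::'k)))
      = (\<Sum>i\<in>{1..<length u}. Poly_Mapping.single (stdw (take i u), stdw (drop i u), v) c)" for u v c
    by (simp add: DeltaMR_single1 lin_expand addf_single_lmult)
  have e2: "lin (\<lambda>q e. Poly_Mapping.single (u, q) (c * e)) (DeltaMR (Poly_Mapping.single v (1::'k)))
      = (\<Sum>i\<in>{1..<length v}. Poly_Mapping.single (u, stdw (take i v), stdw (drop i v)) c)" for u v c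
    by (simp add: DeltaMR_single1 lin_expand addf_single_lmult)
  have D: "DeltaMR x = (\<Sum>s\<in>?X. \<Sum>r\<in>{1..<length s}. Poly_Mapping.single (T s r) (?lx s))"
    by (simp add: DeltaMR_def)
  have "Delta_id (DeltaMR x) = (\<Sum>s\<in>?X. \<Sum>r\<in>{1..<length s}. \<Sum>i\<in>{1..<r}.
      Poly_Mapping.single (stdw (take i (stdw (take r s))), stdw (drop i (stdw (take r s))), stdw (drop r s)) (?lx s))"
    unfolding Delta_id_lin D lin_expand2[OF a1]
    by (intro sum.cong refl) (auto simp: e1 min_absorb2)
  also have "\<dots> = (\<Sum>s\<in>?X. \<Sum>r\<in>{1..<length s}. \<Sum>i\<in>{1..<r}.
      Poly_Mapping.single (stdw (take i s), stdw (take (r - i) (drop i s)), stdw (drop r s)) (?lx s))"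
    by (intro sum.cong refl) (simp add: dis std_take_take std_drop_take)
  also have "\<dots> = (\<Sum>s\<in>?X. \<Sum>r\<in>{1..<length s}. \<Sum>j\<in>{1..<length s - r}.
      Poly_Mapping.single (stdw (take r s), stdw (take j (drop r s)), stdw (drop (r + j) s)) (?lx s))"
    by (rule sum.cong[OF refl], subst tri, simp)
  also have "\<dots> = (\<Sum>s\<in>?X. \<Sum>r\<in>{1..<length s}. \<Sum>j\<in>{1..<length s - r}.
      Poly_Mapping.single (stdw (take r s), stdw (take j (stdw (drop r s))), stdw (drop j (stdw (drop r s)))) (?lx s))"
    by (intro sum.cong refl) (simp add: dis std_take_drop std_drop_drop)
  also have "\<dots> = id_Delta (DeltaMR x)"
    unfolding id_Delta_lin D lin_expand2[OF a2]
    by (intro sum.cong refl) (auto simp: e2)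
  finally show ?thesis .
qed


lemma compat_term:
  assumes g: "g \<in> Sh2 n m" and r: "r \<le> n + m" and s: "is_perm n s" and t: "is_perm m t"
  shows "T (compw (crossw s t) g) r =
    (shE (fst (dec g n m r)) (stdw (take (n1_of g n r) s)) (stdw (take (r - n1_of g n r) t)),
     shE (snd (dec g n m r)) (stdw (drop (n1_of g n r) s)) (stdw (drop (r - n1_of g n r) t)))"
    and "n1_of g n r \<le> n" and "r - n1_of g n r \<le> m"
proof -
  interpret d: dctx n m g r using g r by unfold_locales
  have e: "n1_of g n r = d.n1" "r - n1_of g n r = d.m1" using d.n1_of_eq d.nm_sum by auto
  have ls: "length s = n" "length t = m" using s t by (simp_all add: perm_len)
  have "shE d.g1 (stdw (take d.n1 s)) (stdw (take d.m1 t)) = compw (crossw (stdw (take d.n1 s)) (stdw (take d.m1 t))) d.g1"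
    by (rule shE_eq) (use d.g1_Sh2 ls d.n1_le d.m1_le in simp)
  moreover have "shE d.g2 (stdw (drop d.n1 s)) (stdw (drop d.m1 t)) = compw (crossw (stdw (drop d.n1 s)) (stdw (drop d.m1 t))) d.g2"
    by (rule shE_eq) (use d.g2_Sh2 ls in simp)
  ultimately show "T (compw (crossw s t) g) r =
    (shE (fst (dec g n m r)) (stdw (take (n1_of g n r) s)) (stdw (take (r - n1_of g n r) t)),
     shE (snd (dec g n m r)) (stdw (drop (n1_of g n r) s)) (stdw (drop (r - n1_of g n r) t)))"
    using d.C1[OF s t] d.C2[OF s t] d.dec_eq e by simp
  show "n1_of g n r \<le> n" "r - n1_of g n r \<le> m" using e d.n1_le d.m1_le by auto
qed

lemma Dp_expand:
  fixes x :: "word \<Rightarrow>\<^sub>0 'k::field"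
  assumes "inA n x"
  shows "Delta_plus x = (\<Sum>s\<in>Poly_Mapping.keys x. \<Sum>k\<in>{0..n}. Poly_Mapping.single (T s k) (Poly_Mapping.lookup x s))"
proof -
  let ?lx = "Poly_Mapping.lookup x"
  have "Delta_plus x = (\<Sum>s\<in>Poly_Mapping.keys x. Poly_Mapping.single (s, []) (?lx s) + Poly_Mapping.single ([], s) (?lx s)
      + (\<Sum>r\<in>{1..<length s}. Poly_Mapping.single (T s r) (?lx s)))"
    by (simp add: Delta_plus_def DeltaMR_def sum.distrib)
  also have "\<dots> = (\<Sum>s\<in>Poly_Mapping.keys x. \<Sum>k\<in>{0..n}. Poly_Mapping.single (T s k) (?lx s))"
  proof (rule sum.cong[OF refl])
    fix s assume "s \<in> Poly_Mapping.keys x"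
    then have n: "1 \<le> n" and p: "is_perm n s" using assms by (auto simp: inA_def)
    have l: "length s = n" using p by (simp add: perm_len)
    have set: "{0..n} = insert 0 (insert n {1..<n})" using n by auto
    have "(\<Sum>k\<in>{0..n}. Poly_Mapping.single (T s k) (?lx s)) =
       Poly_Mapping.single (T s 0) (?lx s) + (Poly_Mapping.single (T s n) (?lx s) + (\<Sum>k\<in>{1..<n}. Poly_Mapping.single (T s k) (?lx s)))"
      unfolding set using n by (simp add: sum.insert)
    also have "\<dots> = Poly_Mapping.single (s, []) (?lx s) + Poly_Mapping.single ([], s) (?lx s)
      + (\<Sum>r\<in>{1..<length s}. Poly_Mapping.single (T s r) (?lx s))"
      using stdw_perm_id[OF p] l by (simp add: ac_simps)
    finally show "Poly_Mapping.single (s, []) (?lx s) + Poly_Mapping.single ([], s) (?lx s)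
      + (\<Sum>r\<in>{1..<length s}. Poly_Mapping.single (T s r) (?lx s)) =
      (\<Sum>k\<in>{0..n}. Poly_Mapping.single (T s k) (?lx s))" by simp
  qed
  finally show ?thesis .
qed

definition Gc :: "word \<Rightarrow> nat \<Rightarrow> nat \<Rightarrow> nat \<Rightarrow> word \<times> word \<Rightarrow> word \<times> word \<Rightarrow> 'k::field \<Rightarrow> (word \<times> word \<Rightarrow>\<^sub>0 'k)" where
  "Gc g n m r p q c = (if length (fst p) = n1_of g n r \<and> length (fst q) = r - n1_of g n r
     then Poly_Mapping.single (shE (fst (dec g n m r)) (fst p) (fst q), shE (snd (dec g n m r)) (snd p) (snd q)) c
     else 0)"

lemma addf_Gc: "addf (Gc g n m r p q)"
  unfolding Gc_def by (rule addf_if0) (rule addf_single)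

lemma compat_rhs_lin:
  "compat_rhs g n m x y = (\<Sum>r\<in>{1..<n + m}.
      lin (\<lambda>p a. lin (\<lambda>q b. Gc g n m r p q (a * b)) (Delta_plus y)) (Delta_plus x))"
  unfolding compat_rhs_def Let_def
proof (rule sum.cong[OF refl])
  fix r
  let ?P = "Delta_plus x" and ?Q = "Delta_plus y"
  show "(\<Sum>(a, b)\<in>{p \<in> Poly_Mapping.keys ?P. length (fst p) = n1_of g n r}.
        \<Sum>(c, d)\<in>{p \<in> Poly_Mapping.keys ?Q. length (fst p) = r - n1_of g n r}.
          Poly_Mapping.single (shE (fst (dec g n m r)) a c, shE (snd (dec g n m r)) b d)
           (Poly_Mapping.lookup ?P (a, b) * Poly_Mapping.lookup ?Q (c, d))) =
       lin (\<lambda>p a. lin (\<lambda>q b. Gc g n m r p q (a * b)) ?Q) ?P"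
    unfolding lin_def Gc_def split_def
    by (simp add: sum.inter_filter) (rule sum.cong[OF refl], simp)
qed

lemma sum_sel:
  assumes "finite K" "finite L" "a \<in> K" "b \<in> L"
  shows "(\<Sum>k\<in>K. \<Sum>t\<in>TT. \<Sum>l\<in>L. if k = a \<and> l = b then f t else (0::'b::comm_monoid_add)) = (\<Sum>t\<in>TT. f t)"
proof -
  have "(\<Sum>k\<in>K. \<Sum>t\<in>TT. \<Sum>l\<in>L. if k = a \<and> l = b then f t else 0) = (\<Sum>k\<in>K. if k = a then (\<Sum>t\<in>TT. f t) else 0)"
  proof (rule sum.cong[OF refl])
    fix k assume "k \<in> K"
    show "(\<Sum>t\<in>TT. \<Sum>l\<in>L. if k = a \<and> l = b then f t else 0) = (if k = a then (\<Sum>t\<in>TT. f t) else 0)"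
      using assms by (cases "k = a") (simp_all add: sum.delta')
  qed
  also have "\<dots> = (\<Sum>t\<in>TT. f t)" using assms by (simp add: sum.delta')
  finally show ?thesis .
qed

lemma bil_expand2:
  fixes G :: "'a \<Rightarrow> 'c \<Rightarrow> 'k::field \<Rightarrow> 'b::ab_group_add"
  assumes "\<And>p q. addf (G p q)"
  shows "lin (\<lambda>p a. lin (\<lambda>q b. G p q (a * b)) (\<Sum>j\<in>J. \<Sum>j'\<in>J' j. Poly_Mapping.single (q j j') (\<beta> j j')))
            (\<Sum>i\<in>I. \<Sum>i'\<in>I' i. Poly_Mapping.single (p i i') (\<alpha> i i'))
       = (\<Sum>i\<in>I. \<Sum>i'\<in>I' i. \<Sum>j\<in>J. \<Sum>j'\<in>J' j. G (p i i') (q j j') (\<alpha> i i' * \<beta> j j'))"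
proof -
  have inner: "lin (\<lambda>q' b. G p' q' (a * b)) (\<Sum>j\<in>J. \<Sum>j'\<in>J' j. Poly_Mapping.single (q j j') (\<beta> j j'))
      = (\<Sum>j\<in>J. \<Sum>j'\<in>J' j. G p' (q j j') (a * \<beta> j j'))" for p' a
    by (rule lin_expand2) (rule addf_lin_outer, rule assms)
  have "lin (\<lambda>p a. \<Sum>j\<in>J. \<Sum>j'\<in>J' j. G p (q j j') (a * \<beta> j j')) (\<Sum>i\<in>I. \<Sum>i'\<in>I' i. Poly_Mapping.single (p i i') (\<alpha> i i'))
     = (\<Sum>i\<in>I. \<Sum>i'\<in>I' i. \<Sum>j\<in>J. \<Sum>j'\<in>J' j. G (p i i') (q j j') (\<alpha> i i' * \<beta> j j'))"
    by (rule lin_expand2) (rule addf_sum, rule addf_sum, rule addf_rmult, rule assms)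
  then show ?thesis by (simp add: inner)
qed

lemma part5:
  fixes x y :: "word \<Rightarrow>\<^sub>0 'k::field"
  assumes x: "inA n x" and y: "inA m y" and g: "g \<in> Sh2 n m"
  shows "DeltaMR (shprod g x y) = compat_rhs g n m x y"
proof -
  let ?X = "Poly_Mapping.keys x" and ?Y = "Poly_Mapping.keys y"
  let ?lx = "Poly_Mapping.lookup x" and ?ly = "Poly_Mapping.lookup y"
  let ?w = "\<lambda>s t. compw (crossw s t) g"
  let ?N1 = "\<lambda>r. n1_of g n r" and ?M1 = "\<lambda>r. r - n1_of g n r"
  let ?S = "\<lambda>r s t. (shE (fst (dec g n m r)) (stdw (take (?N1 r) s)) (stdw (take (?M1 r) t)),
     shE (snd (dec g n m r)) (stdw (drop (?N1 r) s)) (stdw (drop (?M1 r) t)))"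
  have px: "\<And>s. s \<in> ?X \<Longrightarrow> is_perm n s" using x by (auto simp: inA_def)
  have py: "\<And>t. t \<in> ?Y \<Longrightarrow> is_perm m t" using y by (auto simp: inA_def)
  have lg: "length g = n + m" using g by (simp add: Sh2_iff perm_len)
  have DL: "DeltaMR z = lin (\<lambda>s a. \<Sum>r\<in>{1..<length s}. Poly_Mapping.single (T s r) a) z" for z :: "word \<Rightarrow>\<^sub>0 'k"
    by (simp add: DeltaMR_def lin_def)
  have "DeltaMR (shprod g x y) = DeltaMR (\<Sum>st\<in>?X \<times> ?Y. Poly_Mapping.single (?w (fst st) (snd st)) (?lx (fst st) * ?ly (snd st)))"
    by (simp only: shprod_pairs)
  also have "\<dots> = (\<Sum>st\<in>?X \<times> ?Y. \<Sum>r\<in>{1..<length (?w (fst st) (snd st))}.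
       Poly_Mapping.single (T (?w (fst st) (snd st)) r) (?lx (fst st) * ?ly (snd st)))"
    unfolding DL by (rule lin_expand) (rule addf_sum, rule addf_single)
  also have "\<dots> = (\<Sum>st\<in>?X \<times> ?Y. \<Sum>r\<in>{1..<n + m}.
       Poly_Mapping.single (T (?w (fst st) (snd st)) r) (?lx (fst st) * ?ly (snd st)))"
    using lg by simp
  also have "\<dots> = (\<Sum>s\<in>?X. \<Sum>t\<in>?Y. \<Sum>r\<in>{1..<n + m}. Poly_Mapping.single (T (?w s t) r) (?lx s * ?ly t))"
    by (rule sum_pairs)
  also have "\<dots> = (\<Sum>s\<in>?X. \<Sum>t\<in>?Y. \<Sum>r\<in>{1..<n + m}. Poly_Mapping.single (?S r s t) (?lx s * ?ly t))"
    by (intro sum.cong refl) (simp add: compat_term(1)[OF g _ px py])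
  also have "\<dots> = (\<Sum>r\<in>{1..<n + m}. \<Sum>s\<in>?X. \<Sum>t\<in>?Y. Poly_Mapping.single (?S r s t) (?lx s * ?ly t))"
    by (subst sum.swap, rule sum.cong[OF refl], rule sum.swap)
  also have "\<dots> = (\<Sum>r\<in>{1..<n + m}. \<Sum>s\<in>?X. \<Sum>k\<in>{0..n}. \<Sum>t\<in>?Y. \<Sum>l\<in>{0..m}.
      Gc g n m r (T s k) (T t l) (?lx s * ?ly t))"
  proof (rule sum.cong[OF refl], rule sum.cong[OF refl])
    fix r s assume r: "r \<in> {1..<n + m}" and s: "s \<in> ?X"
    have b: "?N1 r \<le> n" "?M1 r \<le> m" using compat_term(2,3)[OF g _ px[OF s]] py r
      by (metis atLeastLessThan_iff less_imp_le_nat idp_perm)+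
    have "(\<Sum>k\<in>{0..n}. \<Sum>t\<in>?Y. \<Sum>l\<in>{0..m}. Gc g n m r (T s k) (T t l) (?lx s * ?ly t)) =
      (\<Sum>k\<in>{0..n}. \<Sum>t\<in>?Y. \<Sum>l\<in>{0..m}. if k = ?N1 r \<and> l = ?M1 r then
         Poly_Mapping.single (?S r s t) (?lx s * ?ly t) else 0)"
    proof (intro sum.cong refl)
      fix k t l assume k: "k \<in> {0..n}" and t: "t \<in> ?Y" and l: "l \<in> {0..m}"
      have "length (stdw (take k s)) = k" "length (stdw (take l t)) = l"
        using k l px[OF s] py[OF t] by (simp_all add: perm_len)
      then show "Gc g n m r (T s k) (T t l) (?lx s * ?ly t) = (if k = ?N1 r \<and> l = ?M1 r then
         Poly_Mapping.single (?S r s t) (?lx s * ?ly t) else 0)"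
        by (auto simp: Gc_def)
    qed
    also have "\<dots> = (\<Sum>t\<in>?Y. Poly_Mapping.single (?S r s t) (?lx s * ?ly t))"
      by (rule sum_sel) (use b in auto)
    finally show "(\<Sum>t\<in>?Y. Poly_Mapping.single (?S r s t) (?lx s * ?ly t)) =
      (\<Sum>k\<in>{0..n}. \<Sum>t\<in>?Y. \<Sum>l\<in>{0..m}. Gc g n m r (T s k) (T t l) (?lx s * ?ly t))" by simp
  qed
  also have "\<dots> = (\<Sum>r\<in>{1..<n + m}. lin (\<lambda>p a. lin (\<lambda>q b. Gc g n m r p q (a * b)) (Delta_plus y)) (Delta_plus x))"
    unfolding Dp_expand[OF x] Dp_expand[OF y]
    by (rule sum.cong[OF refl], rule bil_expand2[symmetric], rule addf_Gc)
  also have "\<dots> = compat_rhs g n m x y" by (simp only: compat_rhs_lin)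
  finally show ?thesis .
qed


theorem mainTheorem7:
  fixes K_type :: "'k::field itself"
  shows
  \<comment> \<open>the products are well-defined maps A_n \<otimes> A_m \<rightarrow> A_(n+m)\<close>
  "(\<forall>n m g (x :: word \<Rightarrow>\<^sub>0 'k) y. inA n x \<longrightarrow> inA m y \<longrightarrow> g \<in> Sh2 n m
        \<longrightarrow> inA (n + m) (shprod g x y))
   \<comment> \<open>shuffle algebra associativity\<close>
   \<and> (\<forall>n m r (x :: word \<Rightarrow>\<^sub>0 'k) y z g d s l.
        inA n x \<longrightarrow> inA m y \<longrightarrow> inA r z \<longrightarrow>
        g \<in> Sh2 n (m + r) \<longrightarrow> d \<in> Sh2 m r \<longrightarrow> s \<in> Sh2 n m \<longrightarrow> l \<in> Sh2 (n + m) r \<longrightarrow>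
        compw (crossw (idp n) d) g = compw (crossw s (idp r)) l \<longrightarrow>
        shprod g x (shprod d y z) = shprod l (shprod s x y) z)
   \<comment> \<open>grading of the coproduct\<close>
   \<and> (\<forall>n (x :: word \<Rightarrow>\<^sub>0 'k). inA n x \<longrightarrow>
        (\<forall>(u, v)\<in>Poly_Mapping.keys (DeltaMR x). \<exists>i. 1 \<le> i \<and> i \<le> n - 1 \<and> is_perm i u \<and> is_perm (n - i) v))
   \<comment> \<open>coassociativity\<close>
   \<and> (\<forall>x :: word \<Rightarrow>\<^sub>0 'k. inAll x \<longrightarrow> Delta_id (DeltaMR x) = id_Delta (DeltaMR x))
   \<comment> \<open>compatibility of coproduct and products\<close>
   \<and> (\<forall>n m g (x :: word \<Rightarrow>\<^sub>0 'k) y. inA n x \<longrightarrow> inA m y \<longrightarrow> g \<in> Sh2 n m \<longrightarrow>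
        DeltaMR (shprod g x y) = compat_rhs g n m x y)"
proof (intro conjI)
  show "\<forall>n m g (x :: word \<Rightarrow>\<^sub>0 'k) y. inA n x \<longrightarrow> inA m y \<longrightarrow> g \<in> Sh2 n m
        \<longrightarrow> inA (n + m) (shprod g x y)"
    using part1 by blast
  show "\<forall>n m r (x :: word \<Rightarrow>\<^sub>0 'k) y z g d s l.
        inA n x \<longrightarrow> inA m y \<longrightarrow> inA r z \<longrightarrow>
        g \<in> Sh2 n (m + r) \<longrightarrow> d \<in> Sh2 m r \<longrightarrow> s \<in> Sh2 n m \<longrightarrow> l \<in> Sh2 (n + m) r \<longrightarrow>
        compw (crossw (idp n) d) g = compw (crossw s (idp r)) l \<longrightarrow>
        shprod g x (shprod d y z) = shprod l (shprod s x y) z"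
    using part2 by blast
  show "\<forall>n (x :: word \<Rightarrow>\<^sub>0 'k). inA n x \<longrightarrow>
        (\<forall>(u, v)\<in>Poly_Mapping.keys (DeltaMR x). \<exists>i. 1 \<le> i \<and> i \<le> n - 1 \<and> is_perm i u \<and> is_perm (n - i) v)"
    using part3 by blast
  show "\<forall>x :: word \<Rightarrow>\<^sub>0 'k. inAll x \<longrightarrow> Delta_id (DeltaMR x) = id_Delta (DeltaMR x)"
    using part4 by blast
  show "\<forall>n m g (x :: word \<Rightarrow>\<^sub>0 'k) y. inA n x \<longrightarrow> inA m y \<longrightarrow> g \<in> Sh2 n m \<longrightarrow>
        DeltaMR (shprod g x y) = compat_rhs g n m x y"
    using part5 by blast
qed

end
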